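(* As $\rho\to\infty$, the outage probability $P_d$ of IRS-OMA is asymptotically given by $$P_d^\infty=\left[-2\frac{\gamma_{th_d}}{\rho\Omega_{sr}\Omega_{rd}}\ln\!\left(\sqrt{\frac{\gamma_{th_d}}{\rho\Omega_{sr}\Omega_{rd}}}\right)\right]^{K}\quad\text{if } Q=1,$$ and $$P_d^\infty=\left[\frac{\gamma_{th_d}}{\rho(Q-1)\Omega_{sr}\Omega_{rd}}\right]^{P}\quad\text{if } Q\ge2,$$ in the sense that $P_d/P_d^\infty\to1$ as $\rho\to\infty$.
   Context: Fix integers $P,Q\ge1$, $K=PQ$, and $\Omega_{sr},\Omega_{rd}>0$. Let $X_{d,1},\dots,X_{d,P}$ be i.i.d., each distributed as $\left|\sum_{k=1}^{Q} g_k h_k\right|^2$ with $g_1,\dots,g_Q,h_1,\dots,h_Q$ independent, $g_k\sim\mathcal{CN}(0,\Omega_{sr})$, $h_k\sim\mathcal{CN}(0,\Omega_{rd})$. The SNR of user $d$ is $\gamma_d=\rho\max_p X_{d,p}$ with transmit SNR $\rho>0$. With $R_{oma}>0$ and $\gamma_{th_d}=2^{R_{oma}}-1$, the outage probability is $P_d=\Pr(\gamma_d\le\gamma_{th_d})$. *)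

theory Defs
  imports "HOL-Probability.Probability"
begin

text \<open>Circularly-symmetric complex Gaussian CN(0,Omega): real and imaginary parts
  independent real Gaussians with mean 0 and variance Omega/2.\<close>
definition cnormal :: "real \<Rightarrow> complex measure" where
  "cnormal \<Omega> = distr
     (density lborel (normal_density 0 (sqrt (\<Omega> / 2))) \<Otimes>\<^sub>M
      density lborel (normal_density 0 (sqrt (\<Omega> / 2))))
     borel (\<lambda>(x, y). Complex x y)"

text \<open>One branch p: the channel vectors (g_1..g_Q) and (h_1..h_Q), all independent.\<close>
definition branch_space :: "nat \<Rightarrow> real \<Rightarrow> real \<Rightarrow> ((nat \<Rightarrow> complex) \<times> (nat \<Rightarrow> complex)) measure" where
  "branch_space Q \<Omega>sr \<Omega>rd =
     PiM {..<Q} (\<lambda>_. cnormal \<Omega>sr) \<Otimes>\<^sub>M PiM {..<Q} (\<lambda>_. cnormal \<Omega>rd)"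

definition irs_space :: "nat \<Rightarrow> nat \<Rightarrow> real \<Rightarrow> real \<Rightarrow>
    (nat \<Rightarrow> (nat \<Rightarrow> complex) \<times> (nat \<Rightarrow> complex)) measure" where
  "irs_space P Q \<Omega>sr \<Omega>rd = PiM {..<P} (\<lambda>_. branch_space Q \<Omega>sr \<Omega>rd)"

definition Xdp :: "nat \<Rightarrow> (nat \<Rightarrow> (nat \<Rightarrow> complex) \<times> (nat \<Rightarrow> complex)) \<Rightarrow> nat \<Rightarrow> real" where
  "Xdp Q \<omega> p = (cmod (\<Sum>k<Q. fst (\<omega> p) k * snd (\<omega> p) k))\<^sup>2"

definition outage :: "nat \<Rightarrow> nat \<Rightarrow> real \<Rightarrow> real \<Rightarrow> real \<Rightarrow> real \<Rightarrow> real" where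
  "outage P Q \<Omega>sr \<Omega>rd \<rho> \<gamma>th =
     measure (irs_space P Q \<Omega>sr \<Omega>rd)
       {\<omega> \<in> space (irs_space P Q \<Omega>sr \<Omega>rd). \<rho> * Max (Xdp Q \<omega> ` {..<P}) \<le> \<gamma>th}"

text \<open>The asymptotic expression P_d^infinity from the paper, K = P Q.\<close>
definition outage_asym :: "nat \<Rightarrow> nat \<Rightarrow> real \<Rightarrow> real \<Rightarrow> real \<Rightarrow> real \<Rightarrow> real" where
  "outage_asym P Q \<Omega>sr \<Omega>rd \<rho> \<gamma>th =
     (if Q = 1 then
        (- 2 * (\<gamma>th / (\<rho> * \<Omega>sr * \<Omega>rd)) * ln (sqrt (\<gamma>th / (\<rho> * \<Omega>sr * \<Omega>rd)))) ^ (P * Q)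
      else (\<gamma>th / (\<rho> * real (Q - 1) * \<Omega>sr * \<Omega>rd)) ^ P)"

end

theory Submission
  imports Defs "HOL-Real_Asymp.Real_Asymp"
begin

definition cd :: "real \<Rightarrow> real \<Rightarrow> real \<Rightarrow> real" where
  "cd s x y = exp (- (x\<^sup>2 + y\<^sup>2) / s) / (pi * s)"

lemma cd_nonneg: "s \<ge> 0 \<Longrightarrow> cd s x y \<ge> 0"
  by (simp add: cd_def)

lemma cd_meas[measurable]:
  assumes [measurable]: "f \<in> borel_measurable M" "g \<in> borel_measurable M"
  shows "(\<lambda>p. cd s (f p) (g p)) \<in> borel_measurable M"
  unfolding cd_def by measurable

lemma measurable_Complex[measurable]:
  assumes [measurable]: "f \<in> borel_measurable M" "g \<in> borel_measurable M"
  shows "(\<lambda>x. Complex (f x) (g x)) \<in> borel_measurable M"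
  unfolding Complex_eq by measurable

definition CNI :: "real \<Rightarrow> (complex \<Rightarrow> ennreal) \<Rightarrow> ennreal" where
  "CNI s \<phi> = (if s = 0 then \<phi> 0 else
     \<integral>\<^sup>+x. \<integral>\<^sup>+y. \<phi> (Complex x y) * ennreal (cd s x y) \<partial>lborel \<partial>lborel)"

lemma nd_eq: "s > 0 \<Longrightarrow> normal_density 0 (sqrt (s/2)) x = exp (- x\<^sup>2 / s) / sqrt (pi * s)"
  by (simp add: normal_density_def real_sqrt_divide power_divide real_sqrt_mult)

lemma nd_prod: "s > 0 \<Longrightarrow> normal_density 0 (sqrt (s/2)) x * normal_density 0 (sqrt (s/2)) y = cd s x y"
  by (simp add: nd_eq cd_def mult_exp_exp diff_divide_distrib add_divide_distrib)

lemma prob_N: "s > 0 \<Longrightarrow> prob_space (density lborel (normal_density 0 (sqrt (s/2))))"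
  by (rule prob_space_normal_density) simp

lemma prob_cnormal: "s > 0 \<Longrightarrow> prob_space (cnormal s)"
  unfolding cnormal_def
  by (intro prob_space.prob_space_distr prob_space_pair prob_N) auto

lemma sets_cnormal[measurable_cong]: "sets (cnormal s) = sets borel"
  by (simp add: cnormal_def)

lemma space_cnormal: "space (cnormal s) = UNIV"
  by (simp add: cnormal_def)

lemma L0:
  assumes s: "s > 0" and [measurable]: "\<phi> \<in> borel_measurable borel"
  shows "(\<integral>\<^sup>+z. \<phi> z \<partial>cnormal s) = CNI s \<phi>"
proof -
  let ?N = "density lborel (normal_density 0 (sqrt (s/2)))"
  interpret N: prob_space ?N using prob_N[OF s] .
  interpret NN: pair_sigma_finite ?N ?N ..
  have "(\<integral>\<^sup>+z. \<phi> z \<partial>cnormal s) = (\<integral>\<^sup>+p. \<phi> (Complex (fst p) (snd p)) \<partial>(?N \<Otimes>\<^sub>M ?N))"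
    unfolding cnormal_def by (subst nn_integral_distr) (auto simp: case_prod_beta)
  also have "\<dots> = (\<integral>\<^sup>+x. \<integral>\<^sup>+y. \<phi> (Complex x y) \<partial>?N \<partial>?N)"
    using N.nn_integral_fst[where f="\<lambda>p. \<phi> (Complex (fst p) (snd p))"] by simp
  also have "\<dots> = (\<integral>\<^sup>+x. \<integral>\<^sup>+y. \<phi> (Complex x y) * ennreal (cd s x y) \<partial>lborel \<partial>lborel)"
    apply (subst nn_integral_density, measurable)
    apply (rule nn_integral_cong)
    apply (subst nn_integral_density, measurable)
    apply (subst nn_integral_cmult[symmetric], measurable)
    apply (rule nn_integral_cong)
    using s by (simp add: nd_prod[symmetric] ennreal_mult' mult_ac)
  finally show ?thesis using s by (simp add: CNI_def)
qed

lemma affine':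
  fixes g :: "real \<Rightarrow> ennreal"
  assumes [measurable]: "g \<in> borel_measurable borel" and c: "c \<noteq> 0"
  shows "(\<integral>\<^sup>+x. g (t + c * x) \<partial>lborel) = ennreal (1 / \<bar>c\<bar>) * (\<integral>\<^sup>+x. g x \<partial>lborel)"
proof -
  have "ennreal (1 / \<bar>c\<bar>) * (\<integral>\<^sup>+x. g x \<partial>lborel) =
     ennreal (1 / \<bar>c\<bar>) * (ennreal \<bar>c\<bar> * (\<integral>\<^sup>+x. g (t + c * x) \<partial>lborel))"
    by (subst nn_integral_real_affine[OF assms, of t]) simp
  also have "\<dots> = (\<integral>\<^sup>+x. g (t + c * x) \<partial>lborel)"
    using c by (simp add: mult.assoc[symmetric] ennreal_mult[symmetric])
  finally show ?thesis ..
qed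

lemma ROT0:
  fixes f :: "real \<Rightarrow> real \<Rightarrow> ennreal"
  assumes f[measurable]: "case_prod f \<in> borel_measurable (borel \<Otimes>\<^sub>M borel)" and v: "v \<noteq> 0"
  shows "(\<integral>\<^sup>+x. \<integral>\<^sup>+y. f (- (v * y)) (v * x) \<partial>lborel \<partial>lborel)
     = ennreal (1 / v\<^sup>2) * (\<integral>\<^sup>+x. \<integral>\<^sup>+y. f x y \<partial>lborel \<partial>lborel)"
proof -
  have "(\<integral>\<^sup>+x. \<integral>\<^sup>+y. f (- (v * y)) (v * x) \<partial>lborel \<partial>lborel)
      = (\<integral>\<^sup>+x. ennreal (1/\<bar>v\<bar>) * \<integral>\<^sup>+z. f z (v * x) \<partial>lborel \<partial>lborel)"
  proof (intro nn_integral_cong)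
    fix x
    show "(\<integral>\<^sup>+y. f (- (v * y)) (v * x) \<partial>lborel) = ennreal (1/\<bar>v\<bar>) * \<integral>\<^sup>+z. f z (v * x) \<partial>lborel"
      using affine'[where g="\<lambda>z. f z (v * x)" and t=0 and c="-v"] v by simp
  qed
  also have "\<dots> = ennreal (1/\<bar>v\<bar>) * (\<integral>\<^sup>+x. \<integral>\<^sup>+z. f z (v * x) \<partial>lborel \<partial>lborel)"
    by (rule nn_integral_cmult) measurable
  also have "(\<integral>\<^sup>+x. \<integral>\<^sup>+z. f z (v * x) \<partial>lborel \<partial>lborel) = (\<integral>\<^sup>+z. \<integral>\<^sup>+x. f z (v * x) \<partial>lborel \<partial>lborel)"
    by (rule lborel_pair.Fubini') measurable
  also have "\<dots> = (\<integral>\<^sup>+z. ennreal (1/\<bar>v\<bar>) * \<integral>\<^sup>+w. f z w \<partial>lborel \<partial>lborel)"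
  proof (intro nn_integral_cong)
    fix z
    show "(\<integral>\<^sup>+x. f z (v * x) \<partial>lborel) = ennreal (1/\<bar>v\<bar>) * \<integral>\<^sup>+w. f z w \<partial>lborel"
      using affine'[where g="\<lambda>w. f z w" and t=0 and c="v"] v by simp
  qed
  also have "\<dots> = ennreal (1/\<bar>v\<bar>) * (\<integral>\<^sup>+z. \<integral>\<^sup>+w. f z w \<partial>lborel \<partial>lborel)"
    by (rule nn_integral_cmult) measurable
  finally show ?thesis
    using v by (simp add: mult.assoc[symmetric] ennreal_mult'[symmetric] power2_eq_square abs_mult[symmetric])
qed

lemma ROT1:
  fixes f :: "real \<Rightarrow> real \<Rightarrow> ennreal"
  assumes f[measurable]: "case_prod f \<in> borel_measurable (borel \<Otimes>\<^sub>M borel)" and u: "u \<noteq> 0"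
  shows "(\<integral>\<^sup>+x. \<integral>\<^sup>+y. f (u * x - v * y) (v * x + u * y) \<partial>lborel \<partial>lborel)
     = ennreal (1 / (u\<^sup>2 + v\<^sup>2)) * (\<integral>\<^sup>+x. \<integral>\<^sup>+y. f x y \<partial>lborel \<partial>lborel)"
proof -
  define r where "r = u\<^sup>2 + v\<^sup>2"
  have r: "r > 0" using u by (simp add: r_def add_pos_nonneg)
  have "(\<integral>\<^sup>+x. \<integral>\<^sup>+y. f (u * x - v * y) (v * x + u * y) \<partial>lborel \<partial>lborel)
      = (\<integral>\<^sup>+x. ennreal (1/\<bar>u\<bar>) * \<integral>\<^sup>+w. f ((r * x - v * w) / u) w \<partial>lborel \<partial>lborel)"
  proof (intro nn_integral_cong)
    fix x
    have "(\<integral>\<^sup>+y. f ((r * x - v * (v * x + u * y)) / u) (v * x + u * y) \<partial>lborel)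
       = ennreal (1/\<bar>u\<bar>) * \<integral>\<^sup>+w. f ((r * x - v * w) / u) w \<partial>lborel"
      using affine'[where g="\<lambda>w. f ((r * x - v * w) / u) w" and t="v * x" and c="u"] u by simp
    moreover have "\<And>y. (r * x - v * (v * x + u * y)) / u = u * x - v * y"
      using u by (simp add: r_def field_simps power2_eq_square)
    ultimately show "(\<integral>\<^sup>+y. f (u * x - v * y) (v * x + u * y) \<partial>lborel) = ennreal (1/\<bar>u\<bar>) * \<integral>\<^sup>+w. f ((r * x - v * w) / u) w \<partial>lborel"
      by simp
  qed
  also have "\<dots> = ennreal (1/\<bar>u\<bar>) * (\<integral>\<^sup>+x. \<integral>\<^sup>+w. f ((r * x - v * w) / u) w \<partial>lborel \<partial>lborel)"
    by (rule nn_integral_cmult) measurable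
  also have "(\<integral>\<^sup>+x. \<integral>\<^sup>+w. f ((r * x - v * w) / u) w \<partial>lborel \<partial>lborel) = (\<integral>\<^sup>+w. \<integral>\<^sup>+x. f ((r * x - v * w) / u) w \<partial>lborel \<partial>lborel)"
    by (rule lborel_pair.Fubini') measurable
  also have "\<dots> = (\<integral>\<^sup>+w. ennreal (\<bar>u\<bar> / r) * \<integral>\<^sup>+z. f z w \<partial>lborel \<partial>lborel)"
  proof (intro nn_integral_cong)
    fix w
    have "(\<integral>\<^sup>+x. f (- (v * w) / u + (r / u) * x) w \<partial>lborel) = ennreal (1/\<bar>r / u\<bar>) * \<integral>\<^sup>+z. f z w \<partial>lborel"
      using affine'[where g="\<lambda>z. f z w" and t="- (v * w) / u" and c="r / u"] u r by simp
    moreover have "\<And>x. - (v * w) / u + (r / u) * x = (r * x - v * w) / u"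
      using u by (simp add: field_simps)
    moreover have "1/\<bar>r / u\<bar> = \<bar>u\<bar> / r" using r u by simp
    ultimately show "(\<integral>\<^sup>+x. f ((r * x - v * w) / u) w \<partial>lborel) = ennreal (\<bar>u\<bar> / r) * \<integral>\<^sup>+z. f z w \<partial>lborel"
      using r by simp
  qed
  also have "\<dots> = ennreal (\<bar>u\<bar> / r) * (\<integral>\<^sup>+w. \<integral>\<^sup>+z. f z w \<partial>lborel \<partial>lborel)"
    by (rule nn_integral_cmult) measurable
  also have "(\<integral>\<^sup>+w. \<integral>\<^sup>+z. f z w \<partial>lborel \<partial>lborel) = (\<integral>\<^sup>+z. \<integral>\<^sup>+w. f z w \<partial>lborel \<partial>lborel)"
    by (rule lborel_pair.Fubini') measurable
  finally show ?thesis
    using u r by (simp add: mult.assoc[symmetric] ennreal_mult'[symmetric] r_def)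
qed

lemma ROT:
  fixes f :: "real \<Rightarrow> real \<Rightarrow> ennreal"
  assumes f[measurable]: "case_prod f \<in> borel_measurable (borel \<Otimes>\<^sub>M borel)" and r: "u\<^sup>2 + v\<^sup>2 > 0"
  shows "(\<integral>\<^sup>+x. \<integral>\<^sup>+y. f (u * x - v * y) (v * x + u * y) \<partial>lborel \<partial>lborel)
     = ennreal (1 / (u\<^sup>2 + v\<^sup>2)) * (\<integral>\<^sup>+x. \<integral>\<^sup>+y. f x y \<partial>lborel \<partial>lborel)"
proof (cases "u = 0")
  case True
  then have "v \<noteq> 0" using r by auto
  then show ?thesis using ROT0[OF f] True by simp
next
  case False
  then show ?thesis using ROT1[OF f] by simp
qed

lemma cd_rot:
  assumes s: "s > 0" and r: "u\<^sup>2 + v\<^sup>2 > 0"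
  shows "cd s x y = (u\<^sup>2 + v\<^sup>2) * cd (s * (u\<^sup>2 + v\<^sup>2)) (u * x - v * y) (v * x + u * y)"
proof -
  have e: "(u * x - v * y)\<^sup>2 + (v * x + u * y)\<^sup>2 = (u\<^sup>2 + v\<^sup>2) * (x\<^sup>2 + y\<^sup>2)"
    by (simp add: power2_eq_square algebra_simps)
  have e2: "- ((u\<^sup>2 + v\<^sup>2) * (x\<^sup>2 + y\<^sup>2)) / (s * (u\<^sup>2 + v\<^sup>2)) = - (x\<^sup>2 + y\<^sup>2) / s"
    using r by (auto simp add: divide_simps)
  have "u = 0 \<longrightarrow> v \<noteq> 0" using r by auto
  then show ?thesis unfolding cd_def e e2 using s r by simp
qed

lemma L1:
  assumes s: "s > 0" and [measurable]: "\<phi> \<in> borel_measurable borel"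
  shows "(\<integral>\<^sup>+z. \<phi> (z * h) \<partial>cnormal s) = CNI (s * (cmod h)\<^sup>2) \<phi>"
proof (cases "h = 0")
  case True
  interpret prob_space "cnormal s" using prob_cnormal[OF s] .
  show ?thesis using True by (simp add: CNI_def emeasure_space_1)
next
  case False
  define u where "u = Re h"
  define v where "v = Im h"
  define r where "r = u\<^sup>2 + v\<^sup>2"
  have r: "r > 0" using False by (simp add: r_def u_def v_def add_pos_nonneg complex_eq_iff sum_power2_gt_zero_iff)
  have rh: "(cmod h)\<^sup>2 = r" by (simp add: r_def u_def v_def cmod_power2)
  have hh: "h = Complex u v" by (simp add: u_def v_def)
  define f where "f p q = ennreal r * (\<phi> (Complex p q) * ennreal (cd (s * r) p q))" for p q
  have [measurable]: "case_prod f \<in> borel_measurable (borel \<Otimes>\<^sub>M borel)"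
    unfolding f_def by measurable
  have "(\<integral>\<^sup>+z. \<phi> (z * h) \<partial>cnormal s) = CNI s (\<lambda>z. \<phi> (z * h))"
    by (rule L0[OF s]) measurable
  also have "\<dots> = (\<integral>\<^sup>+x. \<integral>\<^sup>+y. f (u * x - v * y) (v * x + u * y) \<partial>lborel \<partial>lborel)"
    unfolding CNI_def using s
  proof (simp, intro nn_integral_cong)
    fix x y
    have "Complex x y * h = Complex (u * x - v * y) (v * x + u * y)"
      by (simp add: hh complex_eq_iff algebra_simps)
    moreover have "cd s x y = r * cd (s * r) (u * x - v * y) (v * x + u * y)"
      using cd_rot[OF s r[unfolded r_def]] by (simp add: r_def)
    ultimately show "\<phi> (Complex x y * h) * ennreal (cd s x y) = f (u * x - v * y) (v * x + u * y)"
      unfolding f_def using r s by (simp add: ennreal_mult' mult_ac cd_nonneg)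
  qed
  also have "\<dots> = ennreal (1 / r) * (\<integral>\<^sup>+x. \<integral>\<^sup>+y. f x y \<partial>lborel \<partial>lborel)"
    using ROT[of f u v] r by (simp add: r_def)
  also have "(\<integral>\<^sup>+x. \<integral>\<^sup>+y. f x y \<partial>lborel \<partial>lborel) = ennreal r * CNI (s * r) \<phi>"
    unfolding f_def CNI_def using s r
    by (simp add: nn_integral_cmult)
  also have "ennreal (1 / r) * (ennreal r * CNI (s * r) \<phi>) = CNI (s * r) \<phi>"
    using r by (simp add: mult.assoc[symmetric] ennreal_mult'[symmetric])
  finally show ?thesis by (simp add: rh)
qed

abbreviation ND :: "real \<Rightarrow> real \<Rightarrow> real" where
  "ND s x \<equiv> normal_density 0 (sqrt (s / 2)) x"

lemma CONV1:
  assumes s: "s > 0" and t: "t > 0" and [measurable]: "\<psi> \<in> borel_measurable borel"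
  shows "(\<integral>\<^sup>+a. \<integral>\<^sup>+b. \<psi> (a + b) * ennreal (ND s a * ND t b) \<partial>lborel \<partial>lborel)
       = (\<integral>\<^sup>+c. \<psi> c * ennreal (ND (s + t) c) \<partial>lborel)"
proof -
  have "(\<integral>\<^sup>+a. \<integral>\<^sup>+b. \<psi> (a + b) * ennreal (ND s a * ND t b) \<partial>lborel \<partial>lborel)
      = (\<integral>\<^sup>+a. \<integral>\<^sup>+c. \<psi> c * ennreal (ND s a * ND t (c - a)) \<partial>lborel \<partial>lborel)"
  proof (rule nn_integral_cong)
    fix a
    show "(\<integral>\<^sup>+b. \<psi> (a + b) * ennreal (ND s a * ND t b) \<partial>lborel)
       = (\<integral>\<^sup>+c. \<psi> c * ennreal (ND s a * ND t (c - a)) \<partial>lborel)"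
      using nn_integral_real_affine[where f="\<lambda>c. \<psi> c * ennreal (ND s a * ND t (c - a))" and c=1 and t=a]
      by simp
  qed
  also have "\<dots> = (\<integral>\<^sup>+c. \<integral>\<^sup>+a. \<psi> c * ennreal (ND s a * ND t (c - a)) \<partial>lborel \<partial>lborel)"
    by (rule lborel_pair.Fubini') measurable
  also have "\<dots> = (\<integral>\<^sup>+c. \<psi> c * (\<integral>\<^sup>+a. ennreal (ND t (c - a) * ND s a) \<partial>lborel) \<partial>lborel)"
    by (intro nn_integral_cong, subst nn_integral_cmult[symmetric]) (auto simp: mult_ac)
  also have "\<dots> = (\<integral>\<^sup>+c. \<psi> c * ennreal (ND (s + t) c) \<partial>lborel)"
  proof (rule nn_integral_cong)
    fix c
    have "(\<integral>\<^sup>+a. ennreal (ND t (c - a) * ND s a) \<partial>lborel)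
        = normal_density 0 (sqrt ((sqrt (t/2))\<^sup>2 + (sqrt (s/2))\<^sup>2)) c"
      using conv_normal_density_zero_mean[of "sqrt (t/2)" "sqrt (s/2)"] s t by (simp add: fun_eq_iff)
    also have "sqrt ((sqrt (t/2))\<^sup>2 + (sqrt (s/2))\<^sup>2) = sqrt ((s + t) / 2)"
      using s t by simp
    finally show "\<psi> c * (\<integral>\<^sup>+a. ennreal (ND t (c - a) * ND s a) \<partial>lborel) = \<psi> c * ennreal (ND (s + t) c)"
      by simp
  qed
  finally show ?thesis .
qed

lemma Complex_add: "Complex a b + Complex c d = Complex (a + c) (b + d)"
  by (simp add: complex_eq_iff)

lemma cd_split: "s > 0 \<Longrightarrow> cd s x y = ND s x * ND s y"
  by (simp add: nd_prod)

lemma L2: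
  assumes s: "s > 0" and t: "t > 0" and [measurable]: "\<phi> \<in> borel_measurable borel"
  shows "CNI s (\<lambda>w. CNI t (\<lambda>z. \<phi> (z + w))) = CNI (s + t) \<phi>"
proof -
  define \<Psi> where "\<Psi> X = (\<integral>\<^sup>+c. \<phi> (Complex X c) * ennreal (ND (s + t) c) \<partial>lborel)" for X
  have [measurable]: "\<Psi> \<in> borel_measurable borel" unfolding \<Psi>_def by measurable
  have "CNI s (\<lambda>w. CNI t (\<lambda>z. \<phi> (z + w))) =
    (\<integral>\<^sup>+x1. \<integral>\<^sup>+y1. \<integral>\<^sup>+x2. \<integral>\<^sup>+y2. \<phi> (Complex (x1 + x2) (y1 + y2)) * ennreal (ND s x1 * ND t x2)
       * ennreal (ND s y1 * ND t y2) \<partial>lborel \<partial>lborel \<partial>lborel \<partial>lborel)"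
    unfolding CNI_def using s t
    apply simp
    apply (intro nn_integral_cong)
    apply (subst nn_integral_multc[symmetric], measurable)
    apply (intro nn_integral_cong)
    apply (subst nn_integral_multc[symmetric], measurable)
    apply (intro nn_integral_cong)
    apply (simp add: cd_split ennreal_mult' mult_ac Complex_add add.commute)
    done
  also have "\<dots> = (\<integral>\<^sup>+x1. \<integral>\<^sup>+x2. \<integral>\<^sup>+y1. \<integral>\<^sup>+y2. \<phi> (Complex (x1 + x2) (y1 + y2)) * ennreal (ND s x1 * ND t x2)
       * ennreal (ND s y1 * ND t y2) \<partial>lborel \<partial>lborel \<partial>lborel \<partial>lborel)"
    by (intro nn_integral_cong lborel_pair.Fubini') measurable
  also have "\<dots> = (\<integral>\<^sup>+x1. \<integral>\<^sup>+x2. \<Psi> (x1 + x2) * ennreal (ND s x1 * ND t x2) \<partial>lborel \<partial>lborel)"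
  proof (intro nn_integral_cong)
    fix x1 x2
    have "(\<integral>\<^sup>+y1. \<integral>\<^sup>+y2. \<phi> (Complex (x1 + x2) (y1 + y2)) * ennreal (ND s x1 * ND t x2)
       * ennreal (ND s y1 * ND t y2) \<partial>lborel \<partial>lborel) =
       (\<integral>\<^sup>+y1. \<integral>\<^sup>+y2. \<phi> (Complex (x1 + x2) (y1 + y2)) 
       * ennreal (ND s y1 * ND t y2) \<partial>lborel \<partial>lborel) * ennreal (ND s x1 * ND t x2)"
      apply (subst nn_integral_multc[symmetric], measurable)
      apply (intro nn_integral_cong)
      apply (subst nn_integral_multc[symmetric], measurable)
      apply (simp add: mult_ac)
      done
    also have "(\<integral>\<^sup>+y1. \<integral>\<^sup>+y2. \<phi> (Complex (x1 + x2) (y1 + y2)) 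
       * ennreal (ND s y1 * ND t y2) \<partial>lborel \<partial>lborel) = \<Psi> (x1 + x2)"
      unfolding \<Psi>_def by (rule CONV1[OF s t]) measurable
    finally show "(\<integral>\<^sup>+y1. \<integral>\<^sup>+y2. \<phi> (Complex (x1 + x2) (y1 + y2)) * ennreal (ND s x1 * ND t x2)
       * ennreal (ND s y1 * ND t y2) \<partial>lborel \<partial>lborel) = \<Psi> (x1 + x2) * ennreal (ND s x1 * ND t x2)" .
  qed
  also have "\<dots> = (\<integral>\<^sup>+X. \<Psi> X * ennreal (ND (s + t) X) \<partial>lborel)"
    by (rule CONV1[OF s t]) measurable
  also have "\<dots> = CNI (s + t) \<phi>"
    unfolding \<Psi>_def CNI_def using s t
    apply simp
    apply (intro nn_integral_cong)
    apply (subst nn_integral_multc[symmetric], measurable)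
    apply (intro nn_integral_cong)
    apply (simp add: cd_split ennreal_mult' mult_ac)
    done
  finally show ?thesis .
qed

lemma CNI_meas[measurable]:
  fixes F :: "complex \<Rightarrow> complex \<Rightarrow> ennreal"
  assumes [measurable]: "case_prod F \<in> borel_measurable (borel \<Otimes>\<^sub>M borel)"
  shows "(\<lambda>z. CNI s (F z)) \<in> borel_measurable borel"
  unfolding CNI_def by (cases "s = 0") simp_all

lemma sum_upd: "(\<Sum>k<Suc n. (g(n := y)) k * h k) = (\<Sum>k<n. g k * h k) + y * (h n :: complex)"
proof -
  have "(\<Sum>k<n. (g(n := y)) k * h k) = (\<Sum>k<n. g k * h k)" by (rule sum.cong) auto
  then show ?thesis by simp
qed

lemma INDG:
  fixes n :: nat and h :: "nat \<Rightarrow> complex"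
  assumes a: "a > 0"
  shows "\<phi> \<in> borel_measurable borel \<Longrightarrow> (\<integral>\<^sup>+g. \<phi> (\<Sum>k<n. g k * h k) \<partial>PiM {..<n} (\<lambda>_. cnormal a))
     = CNI (a * (\<Sum>k<n. (cmod (h k))\<^sup>2)) \<phi>"
proof (induction n arbitrary: \<phi>)
  case 0
  then show ?case by (simp add: PiM_empty CNI_def)
next
  case (Suc n)
  note [measurable] = Suc.prems
  interpret PS: product_sigma_finite "\<lambda>_::nat. cnormal a"
    unfolding product_sigma_finite_def using prob_cnormal[OF a] prob_space_imp_sigma_finite by blast
  define S where "S = a * (\<Sum>k<n. (cmod (h k))\<^sup>2)"
  define T where "T = a * (cmod (h n))\<^sup>2"
  have S: "S \<ge> 0" and T: "T \<ge> 0" using a by (auto simp: S_def T_def intro!: sum_nonneg mult_nonneg_nonneg)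
  have "(\<integral>\<^sup>+g. \<phi> (\<Sum>k<Suc n. g k * h k) \<partial>PiM {..<Suc n} (\<lambda>_. cnormal a))
     = (\<integral>\<^sup>+y. \<integral>\<^sup>+g. \<phi> (\<Sum>k<Suc n. (g(n := y)) k * h k) \<partial>PiM {..<n} (\<lambda>_. cnormal a) \<partial>cnormal a)"
    unfolding lessThan_Suc by (rule PS.product_nn_integral_insert_rev) auto
  also have "\<dots> = (\<integral>\<^sup>+y. CNI S (\<lambda>w. \<phi> (w + y * h n)) \<partial>cnormal a)"
    unfolding sum_upd S_def by (intro nn_integral_cong Suc.IH) measurable
  also have "\<dots> = CNI T (\<lambda>z. CNI S (\<lambda>w. \<phi> (w + z)))"
    unfolding T_def by (rule L1[OF a]) measurable
  also have "\<dots> = CNI (a * (\<Sum>k<Suc n. (cmod (h k))\<^sup>2)) \<phi>"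
  proof -
    have e: "a * (\<Sum>k<Suc n. (cmod (h k))\<^sup>2) = T + S"
      by (simp add: S_def T_def sum.lessThan_Suc algebra_simps)
    show ?thesis
    proof (cases "S = 0 \<or> T = 0")
      case True
      then show ?thesis unfolding e by (auto simp: CNI_def)
    next
      case False
      then have "S > 0" "T > 0" using S T by auto
      then show ?thesis unfolding e using L2[of T S \<phi>] by (simp add: add.commute)
    qed
  qed
  finally show ?case .
qed

lemma EVEN:
  fixes f :: "real \<Rightarrow> ennreal"
  assumes [measurable]: "f \<in> borel_measurable borel" and ev: "\<And>y. f (- y) = f y"
  shows "(\<integral>\<^sup>+y. f y \<partial>lborel) = 2 * (\<integral>\<^sup>+y. f y * indicator {0<..} y \<partial>lborel)"
proof -
  have "(\<integral>\<^sup>+y. f y \<partial>lborel) = (\<integral>\<^sup>+y. f y * indicator {0<..} y + f y * indicator {..<0} y \<partial>lborel)"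
    by (rule nn_integral_cong_AE, use AE_lborel_singleton[of 0] in eventually_elim)
       (auto split: split_indicator)
  also have "\<dots> = (\<integral>\<^sup>+y. f y * indicator {0<..} y \<partial>lborel) + (\<integral>\<^sup>+y. f y * indicator {..<0} y \<partial>lborel)"
    by (rule nn_integral_add) auto
  also have "(\<integral>\<^sup>+y. f y * indicator {..<0} y \<partial>lborel) = (\<integral>\<^sup>+y. f y * indicator {0<..} y \<partial>lborel)"
  proof -
    have "(\<integral>\<^sup>+y. f (0 + (-1) * y) * indicator {0<..} (0 + (-1) * y) \<partial>lborel) = ennreal (1 / \<bar>-1\<bar>) * (\<integral>\<^sup>+y. f y * indicator {0<..} y \<partial>lborel)"
      by (rule affine') auto
    moreover have "\<And>y. f (0 + (-1) * y) * indicator {0<..} (0 + (-1) * y) = f y * indicator {..<0} y"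
      using ev by (auto split: split_indicator)
    ultimately show ?thesis by simp
  qed
  finally show ?thesis by (simp add: mult_2)
qed

lemma ennreal_inv_mult: "c > 0 \<Longrightarrow> ennreal (1 / c) * (ennreal c * X) = X"
  by (simp add: mult.assoc[symmetric] ennreal_mult'[symmetric])

lemma ATAN: "(\<integral>\<^sup>+s. ennreal (1 / (1 + s\<^sup>2)) * indicator {0<..} s \<partial>lborel) = ennreal (pi / 2)"
proof -
  have "(\<integral>\<^sup>+s. ennreal (1 / (1 + s\<^sup>2)) * indicator {0<..} s \<partial>lborel) =
        (\<integral>\<^sup>+s. ennreal (1 / (1 + s\<^sup>2)) * indicator {0..} s \<partial>lborel)"
    by (rule nn_integral_cong_AE, use AE_lborel_singleton[of 0] in eventually_elim)
       (auto split: split_indicator)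
  also have "\<dots> = ennreal (pi / 2 - arctan 0)"
  proof (rule nn_integral_FTC_atLeast)
    show "((\<lambda>a. arctan a) \<longlongrightarrow> pi / 2) at_top" by (rule tendsto_arctan_at_top)
  qed (auto intro!: derivative_eq_intros simp: add_nonneg_eq_0_iff field_simps power2_eq_square)
  finally show ?thesis by simp
qed

lemma RADG:
  fixes G :: "real \<Rightarrow> ennreal"
  assumes [measurable]: "G \<in> borel_measurable borel"
  shows "(\<integral>\<^sup>+x. \<integral>\<^sup>+y. G (x\<^sup>2 + y\<^sup>2) \<partial>lborel \<partial>lborel)
     = ennreal (2 * pi) * (\<integral>\<^sup>+t. ennreal t * G (t\<^sup>2) * indicator {0<..} t \<partial>lborel)"
proof -
  define K where "K = (\<integral>\<^sup>+t. ennreal t * G (t\<^sup>2) * indicator {0<..} t \<partial>lborel)"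
  have "(\<integral>\<^sup>+x. \<integral>\<^sup>+y. G (x\<^sup>2 + y\<^sup>2) \<partial>lborel \<partial>lborel)
     = (\<integral>\<^sup>+x. 2 * (\<integral>\<^sup>+y. G (x\<^sup>2 + y\<^sup>2) * indicator {0<..} y \<partial>lborel) \<partial>lborel)"
    by (rule nn_integral_cong, rule EVEN) auto
  also have "\<dots> = 2 * (\<integral>\<^sup>+x. (\<integral>\<^sup>+y. G (x\<^sup>2 + y\<^sup>2) * indicator {0<..} y \<partial>lborel) \<partial>lborel)"
    by (rule nn_integral_cmult) measurable
  also have "(\<integral>\<^sup>+x. (\<integral>\<^sup>+y. G (x\<^sup>2 + y\<^sup>2) * indicator {0<..} y \<partial>lborel) \<partial>lborel)
     = 2 * (\<integral>\<^sup>+x. (\<integral>\<^sup>+y. G (x\<^sup>2 + y\<^sup>2) * indicator {0<..} y \<partial>lborel) * indicator {0<..} x \<partial>lborel)"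
    by (rule EVEN) auto
  also have "(\<integral>\<^sup>+x. (\<integral>\<^sup>+y. G (x\<^sup>2 + y\<^sup>2) * indicator {0<..} y \<partial>lborel) * indicator {0<..} x \<partial>lborel)
     = (\<integral>\<^sup>+x. (\<integral>\<^sup>+\<sigma>. ennreal x * G (x\<^sup>2 * (1 + \<sigma>\<^sup>2)) * indicator {0<..} \<sigma> * indicator {0<..} x \<partial>lborel) \<partial>lborel)"
  proof (rule nn_integral_cong)
    fix x :: real
    show "(\<integral>\<^sup>+y. G (x\<^sup>2 + y\<^sup>2) * indicator {0<..} y \<partial>lborel) * indicator {0<..} x
      = (\<integral>\<^sup>+\<sigma>. ennreal x * G (x\<^sup>2 * (1 + \<sigma>\<^sup>2)) * indicator {0<..} \<sigma> * indicator {0<..} x \<partial>lborel)"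
    proof (cases "x > 0")
      case True
      have "(\<integral>\<^sup>+y. G (x\<^sup>2 + y\<^sup>2) * indicator {0<..} y \<partial>lborel)
         = ennreal \<bar>x\<bar> * (\<integral>\<^sup>+\<sigma>. G (x\<^sup>2 + (0 + x * \<sigma>)\<^sup>2) * indicator {0<..} (0 + x * \<sigma>) \<partial>lborel)"
        by (rule nn_integral_real_affine) (use True in auto)
      also have "\<dots> = (\<integral>\<^sup>+\<sigma>. ennreal x * G (x\<^sup>2 * (1 + \<sigma>\<^sup>2)) * indicator {0<..} \<sigma> \<partial>lborel)"
        using True
        by (subst nn_integral_cmult[symmetric], measurable)
           (auto intro!: nn_integral_cong simp: algebra_simps power2_eq_square zero_less_mult_iff
                 split: split_indicator)
      finally show ?thesis using True by simp
    qed simp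
  qed
  also have "\<dots> = (\<integral>\<^sup>+\<sigma>. (\<integral>\<^sup>+x. ennreal x * G (x\<^sup>2 * (1 + \<sigma>\<^sup>2)) * indicator {0<..} \<sigma> * indicator {0<..} x \<partial>lborel) \<partial>lborel)"
    by (rule lborel_pair.Fubini') measurable
  also have "\<dots> = (\<integral>\<^sup>+\<sigma>. ennreal (1 / (1 + \<sigma>\<^sup>2)) * K * indicator {0<..} \<sigma> \<partial>lborel)"
  proof (rule nn_integral_cong)
    fix \<sigma> :: real
    define c where "c = sqrt (1 + \<sigma>\<^sup>2)"
    have c: "c > 0" "c\<^sup>2 = 1 + \<sigma>\<^sup>2" unfolding c_def by (auto simp: add_pos_nonneg)
    have "K = ennreal \<bar>c\<bar> * (\<integral>\<^sup>+x. ennreal (0 + c * x) * G ((0 + c * x)\<^sup>2) * indicator {0<..} (0 + c * x) \<partial>lborel)"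
      unfolding K_def by (rule nn_integral_real_affine) (use c in auto)
    also have "\<dots> = ennreal (c\<^sup>2) * (\<integral>\<^sup>+x. ennreal x * G (x\<^sup>2 * (1 + \<sigma>\<^sup>2)) * indicator {0<..} x \<partial>lborel)"
      using c
      apply (simp add: nn_integral_cmult[symmetric] mult.assoc[symmetric] ennreal_mult'[symmetric])
      apply (intro nn_integral_cong)
      apply (auto simp: power2_eq_square ennreal_mult' zero_less_mult_iff mult_ac split: split_indicator)
      done
    finally have Keq: "K = ennreal (c\<^sup>2) * (\<integral>\<^sup>+x. ennreal x * G (x\<^sup>2 * (1 + \<sigma>\<^sup>2)) * indicator {0<..} x \<partial>lborel)" .
    have pos: "0 < 1 + \<sigma>\<^sup>2" by (simp add: add_pos_nonneg)
    have "(\<integral>\<^sup>+x. ennreal x * G (x\<^sup>2 * (1 + \<sigma>\<^sup>2)) * indicator {0<..} x \<partial>lborel) = ennreal (1 / (1 + \<sigma>\<^sup>2)) * K"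
      by (simp only: Keq c(2) ennreal_inv_mult[OF pos])
    then show "(\<integral>\<^sup>+x. ennreal x * G (x\<^sup>2 * (1 + \<sigma>\<^sup>2)) * indicator {0<..} \<sigma> * indicator {0<..} x \<partial>lborel)
       = ennreal (1 / (1 + \<sigma>\<^sup>2)) * K * indicator {0<..} \<sigma>"
      by (cases "\<sigma> > 0") (auto simp: mult_ac)
  qed
  also have "\<dots> = K * (\<integral>\<^sup>+\<sigma>. ennreal (1 / (1 + \<sigma>\<^sup>2)) * indicator {0<..} \<sigma> \<partial>lborel)"
    by (subst nn_integral_cmult[symmetric], measurable) (auto intro!: nn_integral_cong simp: mult_ac)
  also have "\<dots> = K * ennreal (pi / 2)" by (simp add: ATAN)
  finally have fin: "(\<integral>\<^sup>+x. \<integral>\<^sup>+y. G (x\<^sup>2 + y\<^sup>2) \<partial>lborel \<partial>lborel) = 2 * (2 * (K * ennreal (pi / 2)))" .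
  have e: "ennreal (2 * pi) = 2 * (2 * ennreal (pi / 2))"
  proof -
    have "ennreal (2 * pi) = ennreal (2 * (2 * (pi / 2)))" by simp
    also have "\<dots> = ennreal 2 * ennreal (2 * (pi / 2))" by (rule ennreal_mult) auto
    also have "ennreal (2 * (pi / 2)) = ennreal 2 * ennreal (pi / 2)" by (rule ennreal_mult) auto
    also have "ennreal 2 = 2" by simp
    finally show ?thesis .
  qed
  show ?thesis unfolding K_def[symmetric] e fin by (simp only: ac_simps)
qed

lemma RAD:
  assumes s: "s > 0" and [measurable]: "\<psi> \<in> borel_measurable borel"
  shows "CNI s (\<lambda>z. \<psi> ((cmod z)\<^sup>2)) =
    (\<integral>\<^sup>+t. \<psi> (t\<^sup>2) * ennreal (2 * t / s * exp (- t\<^sup>2 / s)) * indicator {0<..} t \<partial>lborel)"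
proof -
  define G where "G r = \<psi> r * ennreal (exp (- r / s) / (pi * s))" for r
  have [measurable]: "G \<in> borel_measurable borel" unfolding G_def by measurable
  have "CNI s (\<lambda>z. \<psi> ((cmod z)\<^sup>2)) = (\<integral>\<^sup>+x. \<integral>\<^sup>+y. G (x\<^sup>2 + y\<^sup>2) \<partial>lborel \<partial>lborel)"
    unfolding CNI_def G_def cd_def using s by (simp add: cmod_power2)
  also have "\<dots> = ennreal (2 * pi) * (\<integral>\<^sup>+t. ennreal t * G (t\<^sup>2) * indicator {0<..} t \<partial>lborel)"
    by (rule RADG) measurable
  also have "\<dots> = (\<integral>\<^sup>+t. ennreal (2 * pi) * (ennreal t * G (t\<^sup>2) * indicator {0<..} t) \<partial>lborel)"
    by (rule nn_integral_cmult[symmetric]) measurable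
  also have "\<dots> = (\<integral>\<^sup>+t. \<psi> (t\<^sup>2) * ennreal (2 * t / s * exp (- t\<^sup>2 / s)) * indicator {0<..} t \<partial>lborel)"
  proof (rule nn_integral_cong)
    fix t :: real
    show "ennreal (2 * pi) * (ennreal t * G (t\<^sup>2) * indicator {0<..} t) =
      \<psi> (t\<^sup>2) * ennreal (2 * t / s * exp (- t\<^sup>2 / s)) * indicator {0<..} t"
    proof (cases "t > 0")
      case True
      have "ennreal (2 * pi) * (ennreal t * ennreal (exp (- t\<^sup>2 / s) / (pi * s))) =
            ennreal (2 * t / s * exp (- t\<^sup>2 / s))"
        using True s by (simp add: ennreal_mult'[symmetric] field_simps)
      moreover have "ennreal (2 * pi) * (ennreal t * (\<psi> (t\<^sup>2) * ennreal (exp (- (t\<^sup>2) / s) / (pi * s))) * indicator {0<..} t)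
        = \<psi> (t\<^sup>2) * (ennreal (2 * pi) * (ennreal t * ennreal (exp (- t\<^sup>2 / s) / (pi * s))))"
        using True by (simp only: ac_simps indicator_simps mult_1_right) simp
      ultimately show ?thesis using True unfolding G_def by simp
    qed simp
  qed
  finally show ?thesis .
qed

lemma R1:
  assumes s: "s > 0" and c: "c \<ge> 0"
  shows "CNI s (indicator {z. (cmod z)\<^sup>2 \<le> c}) = ennreal (1 - exp (- c / s))"
proof -
  have "CNI s (indicator {z. (cmod z)\<^sup>2 \<le> c}) = CNI s (\<lambda>z. indicator {..c} ((cmod z)\<^sup>2))"
    by (rule arg_cong[where f="CNI s"]) (auto simp: indicator_def fun_eq_iff)
  also have "\<dots> = (\<integral>\<^sup>+t. indicator {..c} (t\<^sup>2) * ennreal (2 * t / s * exp (- t\<^sup>2 / s)) * indicator {0<..} t \<partial>lborel)"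
    by (rule RAD[OF s]) measurable
  also have "\<dots> = (\<integral>\<^sup>+t. ennreal (2 * t / s * exp (- t\<^sup>2 / s)) * indicator {0..sqrt c} t \<partial>lborel)"
  proof (rule nn_integral_cong)
    fix t :: real
    show "indicator {..c} (t\<^sup>2) * ennreal (2 * t / s * exp (- t\<^sup>2 / s)) * indicator {0<..} t =
      ennreal (2 * t / s * exp (- t\<^sup>2 / s)) * indicator {0..sqrt c} t"
    proof (cases "t > 0")
      case True
      then have "t\<^sup>2 \<le> c \<longleftrightarrow> t \<le> sqrt c" using c
        by (metis abs_of_pos less_le real_le_rsqrt real_sqrt_abs real_sqrt_le_iff sqrt_le_D)
      then show ?thesis using True by (auto simp: indicator_def)
    next
      case False
      then show ?thesis by (cases "t = 0") (auto simp: indicator_def)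
    qed
  qed
  also have "\<dots> = ennreal ((- exp (- (sqrt c)\<^sup>2 / s)) - (- exp (- 0\<^sup>2 / s)))"
  proof (rule nn_integral_FTC_Icc)
    fix t assume "t \<in> {0..sqrt c}"
    then show "((\<lambda>t. - exp (- t\<^sup>2 / s)) has_real_derivative 2 * t / s * exp (- t\<^sup>2 / s)) (at t)"
      using s by (auto intro!: derivative_eq_intros simp: field_simps)
    show "0 \<le> 2 * t / s * exp (- t\<^sup>2 / s)" using s \<open>t \<in> {0..sqrt c}\<close> by auto
  qed (use c in auto)
  finally show ?thesis using c by simp
qed

lemma R2:
  assumes s: "s > 0" and l: "l \<ge> 0"
  shows "CNI s (\<lambda>z. ennreal (exp (- l * (cmod z)\<^sup>2))) = ennreal (1 / (1 + l * s))"
proof -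
  define \<mu> where "\<mu> = l + 1 / s"
  have \<mu>: "\<mu> > 0" using s l by (simp add: \<mu>_def add_nonneg_pos)
  have "CNI s (\<lambda>z. ennreal (exp (- l * (cmod z)\<^sup>2))) =
     (\<integral>\<^sup>+t. ennreal (exp (- l * t\<^sup>2)) * ennreal (2 * t / s * exp (- t\<^sup>2 / s)) * indicator {0<..} t \<partial>lborel)"
    by (rule RAD[OF s, of "\<lambda>r. ennreal (exp (- l * r))"]) measurable
  also have "\<dots> = (\<integral>\<^sup>+t. ennreal (2 * t / s * exp (- \<mu> * t\<^sup>2)) * indicator {0..} t \<partial>lborel)"
  proof (rule nn_integral_cong)
    fix t :: real
    have "exp (- l * t\<^sup>2) * (2 * t / s * exp (- t\<^sup>2 / s)) = 2 * t / s * exp (- \<mu> * t\<^sup>2)"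
    proof -
      have "exp (- l * t\<^sup>2) * (2 * t / s * exp (- t\<^sup>2 / s)) = 2 * t / s * (exp (- l * t\<^sup>2) * exp (- t\<^sup>2 / s))"
        by simp
      also have "\<dots> = 2 * t / s * exp (- l * t\<^sup>2 + - t\<^sup>2 / s)" by (simp add: mult_exp_exp)
      also have "- l * t\<^sup>2 + - t\<^sup>2 / s = - \<mu> * t\<^sup>2" unfolding \<mu>_def by (simp add: algebra_simps)
      finally show ?thesis .
    qed
    then show "ennreal (exp (- l * t\<^sup>2)) * ennreal (2 * t / s * exp (- t\<^sup>2 / s)) * indicator {0<..} t =
      ennreal (2 * t / s * exp (- \<mu> * t\<^sup>2)) * indicator {0..} t"
      using s by (cases "t > 0"; cases "t = 0") (auto simp: indicator_def ennreal_mult'[symmetric])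
  qed
  also have "\<dots> = ennreal (0 - (- 1 / (s * \<mu>) * exp (- \<mu> * 0\<^sup>2)))"
  proof (rule nn_integral_FTC_atLeast)
    fix t :: real
    show "((\<lambda>t. - 1 / (s * \<mu>) * exp (- \<mu> * t\<^sup>2)) has_real_derivative 2 * t / s * exp (- \<mu> * t\<^sup>2)) (at t)"
      using s \<mu> by (auto intro!: derivative_eq_intros simp: field_simps)
    assume "0 \<le> t"
    then show "0 \<le> 2 * t / s * exp (- \<mu> * t\<^sup>2)" using s by auto
  next
    show "((\<lambda>t. - 1 / (s * \<mu>) * exp (- \<mu> * t\<^sup>2)) \<longlongrightarrow> 0) at_top"
      using \<mu> by real_asymp
  qed measurable
  also have "0 - (- 1 / (s * \<mu>) * exp (- \<mu> * 0\<^sup>2)) = 1 / (1 + l * s)"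
  proof -
    have "s * \<mu> = 1 + l * s" unfolding \<mu>_def using s by (simp add: field_simps)
    then show ?thesis by simp
  qed
  finally show ?thesis .
qed

definition Sq :: "nat \<Rightarrow> (nat \<Rightarrow> complex) \<Rightarrow> real" where
  "Sq Q h = (\<Sum>k<Q. (cmod (h k))\<^sup>2)"

lemma Sq_nonneg: "Sq Q h \<ge> 0" unfolding Sq_def by (auto intro!: sum_nonneg)

lemma Sq_ge0: "Q \<ge> 1 \<Longrightarrow> (cmod (h 0))\<^sup>2 \<le> Sq Q h"
  unfolding Sq_def by (rule member_le_sum) auto

lemma prob_PM: "b > 0 \<Longrightarrow> prob_space (PiM {..<Q} (\<lambda>_. cnormal b))"
  by (intro prob_space_PiM prob_cnormal)

lemma AE_Sq:
  assumes Q: "Q \<ge> 1" and b: "b > 0"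
  shows "AE h in PiM {..<Q} (\<lambda>_. cnormal b). Sq Q h > 0"
proof -
  define e :: "nat \<Rightarrow> complex" where "e k = (if k = 0 then 1 else 0)" for k
  define N where "N = {h \<in> space (PiM {..<Q} (\<lambda>_. cnormal b)). (cmod (h 0))\<^sup>2 \<le> 0}"
  have Q0[simp]: "0 \<in> {..<Q}" using Q by auto
  have Nm: "N \<in> sets (PiM {..<Q} (\<lambda>_. cnormal b))"
  proof -
    have m: "(\<lambda>h. h 0) \<in> measurable (PiM {..<Q} (\<lambda>_. cnormal b)) (cnormal b)"
      by (intro measurable_component_singleton) (use Q in auto)
    have A: "{z. (cmod z)\<^sup>2 \<le> 0} \<in> sets (cnormal b)"
      unfolding sets_cnormal by measurable
    have "N = (\<lambda>h. h 0) -` {z. (cmod z)\<^sup>2 \<le> 0} \<inter> space (PiM {..<Q} (\<lambda>_. cnormal b))"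
      by (auto simp: N_def)
    then show ?thesis using measurable_sets[OF m A] by simp
  qed
  have se: "(\<Sum>k<Q. h k * e k) = h 0" for h
    using Q by (simp add: e_def if_distrib[of "\<lambda>x. _ * x"] sum.delta' cong: if_cong)
  have "(\<Sum>k<Q. (cmod (e k))\<^sup>2) = 1"
    using Q by (simp add: e_def if_distrib[of "\<lambda>x. (cmod x)\<^sup>2"] sum.delta' cong: if_cong)
  then have "CNI b (indicator {z. (cmod z)\<^sup>2 \<le> 0}) =
     (\<integral>\<^sup>+h. indicator {z. (cmod z)\<^sup>2 \<le> 0} (\<Sum>k<Q. h k * e k) \<partial>PiM {..<Q} (\<lambda>_. cnormal b))"
    using INDG[OF b, of "indicator {z. (cmod z)\<^sup>2 \<le> 0}" Q e] by simp
  also have "\<dots> = emeasure (PiM {..<Q} (\<lambda>_. cnormal b)) N"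
    unfolding se
    by (subst nn_integral_indicator[symmetric, OF Nm]) (auto intro!: nn_integral_cong simp: indicator_def N_def)
  finally have "emeasure (PiM {..<Q} (\<lambda>_. cnormal b)) N = 0"
    using R1[OF b, of 0] by simp
  moreover note Nm
  ultimately have "N \<in> null_sets (PiM {..<Q} (\<lambda>_. cnormal b))" by (simp add: null_sets_def)
  moreover have "{h \<in> space (PiM {..<Q} (\<lambda>_. cnormal b)). \<not> 0 < Sq Q h} \<subseteq> N"
  proof
    fix h assume "h \<in> {h \<in> space (PiM {..<Q} (\<lambda>_. cnormal b)). \<not> 0 < Sq Q h}"
    moreover have "(cmod (h 0))\<^sup>2 \<le> 0"
    proof -
      have "(cmod (h 0))\<^sup>2 \<le> Sq Q h" by (rule Sq_ge0[OF Q])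
      moreover have "\<not> 0 < Sq Q h" using calculation \<open>h \<in> _\<close> by simp
      ultimately show ?thesis by linarith
    qed
    ultimately show "h \<in> N" unfolding N_def by blast
  qed
  ultimately show ?thesis by (rule AE_I')
qed

lemma BR:
  assumes Q: "Q \<ge> 1" and a: "a > 0" and b: "b > 0" and c: "c \<ge> 0"
  shows "emeasure (branch_space Q a b) {x \<in> space (branch_space Q a b). (cmod (\<Sum>k<Q. fst x k * snd x k))\<^sup>2 \<le> c}
     = (\<integral>\<^sup>+h. ennreal (1 - exp (- c / (a * Sq Q h))) \<partial>PiM {..<Q} (\<lambda>_. cnormal b))"
proof -
  let ?A = "PiM {..<Q} (\<lambda>_. cnormal a)"
  let ?B = "PiM {..<Q} (\<lambda>_. cnormal b)"
  interpret A: prob_space ?A using prob_PM[OF a] .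
  interpret B: prob_space ?B using prob_PM[OF b] .
  interpret AB: pair_sigma_finite ?A ?B ..
  define E where "E = {x \<in> space (?A \<Otimes>\<^sub>M ?B). (cmod (\<Sum>k<Q. fst x k * snd x k))\<^sup>2 \<le> c}"
  have Em[measurable]: "E \<in> sets (?A \<Otimes>\<^sub>M ?B)" unfolding E_def by measurable
  have "emeasure (branch_space Q a b) {x \<in> space (branch_space Q a b). (cmod (\<Sum>k<Q. fst x k * snd x k))\<^sup>2 \<le> c}
      = emeasure (?A \<Otimes>\<^sub>M ?B) E" by (simp add: branch_space_def E_def)
  also have "\<dots> = (\<integral>\<^sup>+x. indicator E x \<partial>(?A \<Otimes>\<^sub>M ?B))"
    by (rule nn_integral_indicator[symmetric]) (rule Em)
  also have "\<dots> = (\<integral>\<^sup>+h. \<integral>\<^sup>+g. indicator E (g, h) \<partial>?A \<partial>?B)"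
    by (rule AB.nn_integral_snd[symmetric]) measurable
  also have "\<dots> = (\<integral>\<^sup>+h. CNI (a * Sq Q h) (indicator {z. (cmod z)\<^sup>2 \<le> c}) \<partial>?B)"
  proof (rule nn_integral_cong)
    fix h assume h: "h \<in> space ?B"
    have "(\<integral>\<^sup>+g. indicator E (g, h) \<partial>?A) = (\<integral>\<^sup>+g. indicator {z. (cmod z)\<^sup>2 \<le> c} (\<Sum>k<Q. g k * h k) \<partial>?A)"
      by (rule nn_integral_cong) (use h in \<open>auto simp: E_def indicator_def space_pair_measure\<close>)
    also have "\<dots> = CNI (a * Sq Q h) (indicator {z. (cmod z)\<^sup>2 \<le> c})"
      unfolding Sq_def by (rule INDG[OF a]) measurable
    finally show "(\<integral>\<^sup>+g. indicator E (g, h) \<partial>?A) = CNI (a * Sq Q h) (indicator {z. (cmod z)\<^sup>2 \<le> c})" .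
  qed
  also have "\<dots> = (\<integral>\<^sup>+h. ennreal (1 - exp (- c / (a * Sq Q h))) \<partial>?B)"
  proof (rule nn_integral_cong_AE)
    show "AE h in ?B. CNI (a * Sq Q h) (indicator {z. (cmod z)\<^sup>2 \<le> c}) = ennreal (1 - exp (- c / (a * Sq Q h)))"
      using AE_Sq[OF Q b]
    proof eventually_elim
      case (elim h)
      then show ?case using R1[of "a * Sq Q h" c] a c by simp
    qed
  qed
  finally show ?thesis .
qed

lemma prob_branch: "a > 0 \<Longrightarrow> b > 0 \<Longrightarrow> prob_space (branch_space Q a b)"
  unfolding branch_space_def by (intro prob_space_pair prob_PM)

lemma OUT:
  assumes P: "P \<ge> 1" and a: "a > 0" and b: "b > 0" and r: "\<rho> > 0"
  shows "outage P Q a b \<rho> \<gamma> =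
    (measure (branch_space Q a b) {x \<in> space (branch_space Q a b). (cmod (\<Sum>k<Q. fst x k * snd x k))\<^sup>2 \<le> \<gamma> / \<rho>}) ^ P"
proof -
  let ?M = "branch_space Q a b"
  define Eb where "Eb = {x \<in> space ?M. (cmod (\<Sum>k<Q. fst x k * snd x k))\<^sup>2 \<le> \<gamma> / \<rho>}"
  interpret M: prob_space ?M using prob_branch[OF a b] .
  interpret PS: product_sigma_finite "\<lambda>_::nat. ?M"
    unfolding product_sigma_finite_def using M.sigma_finite_measure_axioms by blast
  have Ebm: "Eb \<in> sets ?M" unfolding Eb_def branch_space_def by measurable
  have "0 \<in> {..<P}" using P by simp
  then have ne: "{..<P} \<noteq> {}" by blast
  have set: "{\<omega> \<in> space (irs_space P Q a b). \<rho> * Max (Xdp Q \<omega> ` {..<P}) \<le> \<gamma>} = PiE {..<P} (\<lambda>_. Eb)"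
  proof -
    have "\<rho> * Max (Xdp Q \<omega> ` {..<P}) \<le> \<gamma> \<longleftrightarrow> (\<forall>p<P. Xdp Q \<omega> p \<le> \<gamma> / \<rho>)" for \<omega>
    proof -
      have "\<rho> * Max (Xdp Q \<omega> ` {..<P}) \<le> \<gamma> \<longleftrightarrow> Max (Xdp Q \<omega> ` {..<P}) \<le> \<gamma> / \<rho>"
        using r by (simp add: field_simps)
      also have "\<dots> \<longleftrightarrow> (\<forall>p<P. Xdp Q \<omega> p \<le> \<gamma> / \<rho>)"
        using ne by (subst Max_le_iff) auto
      finally show ?thesis .
    qed
    then show ?thesis
      by (auto simp: irs_space_def space_PiM Eb_def Xdp_def PiE_iff extensional_def)
  qed
  have "emeasure (irs_space P Q a b) (PiE {..<P} (\<lambda>_. Eb)) = (\<Prod>i<P. emeasure ?M Eb)"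
    unfolding irs_space_def by (rule PS.emeasure_PiM) (use Ebm in auto)
  also have "\<dots> = ennreal ((measure ?M Eb) ^ P)"
    by (simp add: M.emeasure_eq_measure ennreal_power)
  finally have "measure (irs_space P Q a b) (PiE {..<P} (\<lambda>_. Eb)) = (measure ?M Eb) ^ P"
    by (simp add: measure_def)
  then show ?thesis unfolding outage_def set Eb_def .
qed

lemma lim0': "((\<lambda>y::real. y - y * exp (- inverse y)) \<longlongrightarrow> 1) at_top"
  by real_asymp

lemma lim0: "((\<lambda>y::real. y * (1 - exp (- 1 / y))) \<longlongrightarrow> 1) at_top"
proof -
  have "\<And>y::real. y * (1 - exp (- 1 / y)) = y - y * exp (- inverse y)"
    by (simp add: algebra_simps inverse_eq_divide)
  then have "(\<lambda>y::real. y * (1 - exp (- 1 / y))) = (\<lambda>y. y - y * exp (- inverse y))" by (rule ext)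
  then show ?thesis using lim0' by (simp only:)
qed

lemma lim1:
  fixes K :: real
  assumes K: "K > 0"
  shows "((\<lambda>t. t * (1 - exp (- 1 / (t * K)))) \<longlongrightarrow> 1 / K) at_top"
proof -
  have f: "filterlim (\<lambda>t. t * K) at_top at_top"
  proof -
    have "filterlim (\<lambda>t::real. t) at_top at_top" by (rule filterlim_ident)
    from filterlim_at_top_mult_tendsto_pos[OF tendsto_const K this] show ?thesis .
  qed
  have "((\<lambda>t. 1 / K * ((t * K) * (1 - exp (- 1 / (t * K))))) \<longlongrightarrow> 1 / K * 1) at_top"
    by (intro tendsto_mult tendsto_const filterlim_compose[OF lim0 f])
  then show ?thesis using K by simp
qed

lemma der2:
  fixes K x :: real
  assumes K: "K > 0" and x: "x \<ge> 0"
  shows "((\<lambda>x. - 1 / (K * (real m + 1)) * (1 / (1 + x * K)) ^ (m + 1)) has_real_derivative (1 / (1 + x * K)) ^ (m + 2)) (at x)"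
proof -
  have u: "1 + x * K > 0" using K x by (simp add: add_pos_nonneg)
  have e: "- 1 / (K * (real m + 1)) * (real (m + 1) * ((1 / (1 + x * K)) ^ m * (- K / (1 + x * K)^2)))
      = (1 / (1 + x * K)) ^ (m + 2)"
  proof -
    have "K * (real m + 1) > 0" using K by simp
    then show ?thesis using u K by (simp add: field_simps power2_eq_square)
  qed
  show ?thesis
    unfolding e[symmetric]
  proof (rule DERIV_cmult)
    have d: "((\<lambda>x. 1 / (1 + x * K)) has_field_derivative (- K / (1 + x * K)^2)) (at x)"
      using u by (auto intro!: derivative_eq_intros simp: power2_eq_square)
    show "((\<lambda>x. (1 / (1 + x * K)) ^ (m + 1)) has_field_derivative
        real (m + 1) * ((1 / (1 + x * K)) ^ m * (- K / (1 + x * K)\<^sup>2))) (at x)"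
      using DERIV_power_Suc[OF d, of m] by (simp add: mult_ac)
  qed
qed

lemma lim2:
  fixes K :: real
  assumes "K > 0"
  shows "((\<lambda>x. - 1 / (K * (real m + 1)) * (1 / (1 + x * K)) ^ (m + 1)) \<longlongrightarrow> 0) at_top"
  using assms by real_asymp

lemma lim3:
  fixes S :: real
  assumes "S > 0"
  shows "((\<lambda>l. - exp (- l * S) / S) \<longlongrightarrow> 0) at_top"
  using assms by real_asymp

lemma LAP1:
  fixes S :: real
  assumes S: "S > 0"
  shows "ennreal (1 / S) = (\<integral>\<^sup>+l. ennreal (exp (- l * S)) * indicator {0..} l \<partial>lborel)"
proof -
  have "(\<integral>\<^sup>+l. ennreal (exp (- l * S)) * indicator {0..} l \<partial>lborel) = ennreal (0 - (- exp (- 0 * S) / S))"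
  proof (rule nn_integral_FTC_atLeast)
    fix l :: real
    show "((\<lambda>l. - exp (- l * S) / S) has_real_derivative exp (- l * S)) (at l)"
      using S by (auto intro!: derivative_eq_intros simp: field_simps)
  qed (use lim3[OF S] in auto)
  then show ?thesis by simp
qed

lemma PROD:
  assumes a: "a > 0" and b: "b > 0" and l: "l \<ge> 0"
  shows "(\<integral>\<^sup>+h. ennreal (exp (- l * (a * Sq Q h))) \<partial>PiM {..<Q} (\<lambda>_. cnormal b))
     = ennreal ((1 / (1 + l * a * b)) ^ Q)"
proof -
  interpret PS: product_sigma_finite "\<lambda>_::nat. cnormal b"
    unfolding product_sigma_finite_def using prob_cnormal[OF b] prob_space_imp_sigma_finite by blast
  have "(\<integral>\<^sup>+h. ennreal (exp (- l * (a * Sq Q h))) \<partial>PiM {..<Q} (\<lambda>_. cnormal b))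
     = (\<integral>\<^sup>+h. (\<Prod>k\<in>{..<Q}. ennreal (exp (- (l * a) * (cmod (h k))\<^sup>2))) \<partial>PiM {..<Q} (\<lambda>_. cnormal b))"
  proof (rule nn_integral_cong)
    fix h :: "nat \<Rightarrow> complex"
    have "exp (- l * (a * Sq Q h)) = exp (\<Sum>k<Q. - (l * a) * (cmod (h k))\<^sup>2)"
      unfolding Sq_def by (simp add: sum_distrib_left sum_negf mult_ac)
    also have "\<dots> = (\<Prod>k<Q. exp (- (l * a) * (cmod (h k))\<^sup>2))" by (rule exp_sum) simp
    finally show "ennreal (exp (- l * (a * Sq Q h))) = (\<Prod>k\<in>{..<Q}. ennreal (exp (- (l * a) * (cmod (h k))\<^sup>2)))"
      by (simp add: prod_ennreal)
  qed
  also have "\<dots> = (\<Prod>k\<in>{..<Q}. \<integral>\<^sup>+z. ennreal (exp (- (l * a) * (cmod z)\<^sup>2)) \<partial>cnormal b)"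
    by (rule PS.product_nn_integral_prod) auto
  also have "\<dots> = (\<Prod>k\<in>{..<Q}. ennreal (1 / (1 + l * a * b)))"
  proof (rule prod.cong[OF refl])
    fix k
    have "(\<integral>\<^sup>+z. ennreal (exp (- (l * a) * (cmod z)\<^sup>2)) \<partial>cnormal b) = CNI b (\<lambda>z. ennreal (exp (- (l * a) * (cmod z)\<^sup>2)))"
      by (rule L0[OF b]) measurable
    also have "\<dots> = ennreal (1 / (1 + l * a * b))"
      using R2[OF b, of "l * a"] a l by simp
    finally show "(\<integral>\<^sup>+z. ennreal (exp (- (l * a) * (cmod z)\<^sup>2)) \<partial>cnormal b) = ennreal (1 / (1 + l * a * b))" .
  qed
  also have "\<dots> = ennreal ((1 / (1 + l * a * b)) ^ Q)"
  proof -
    have "0 \<le> l * a * b" using a b l by simp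
    then have "0 \<le> 1 / (1 + l * a * b)" by simp
    then show ?thesis by (simp add: ennreal_power)
  qed
  finally show ?thesis .
qed

lemma Sq_meas[measurable]:
  assumes [measurable]: "f \<in> measurable N (PiM {..<Q} (\<lambda>_. cnormal b))"
  shows "(\<lambda>x. Sq Q (f x)) \<in> borel_measurable N"
  unfolding Sq_def
proof (rule borel_measurable_sum)
  fix k assume k: "k \<in> {..<Q}"
  have "(\<lambda>x. f x k) \<in> measurable N (cnormal b)"
    by (rule measurable_compose[OF assms measurable_component_singleton]) (use k in simp)
  then have m: "(\<lambda>x. f x k) \<in> borel_measurable N"
    by (simp add: measurable_cong_sets[OF refl sets_cnormal])
  have c: "(\<lambda>z::complex. (cmod z)\<^sup>2) \<in> borel_measurable borel" by measurable
  show "(\<lambda>x. (cmod (f x k))\<^sup>2) \<in> borel_measurable N"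
    using measurable_compose[OF m c] by simp
qed

lemma INVS:
  assumes Q: "Q \<ge> 2" and a: "a > 0" and b: "b > 0"
  shows "(\<integral>\<^sup>+h. ennreal (1 / (a * Sq Q h)) \<partial>PiM {..<Q} (\<lambda>_. cnormal b)) = ennreal (1 / (a * b * real (Q - 1)))"
proof -
  let ?B = "PiM {..<Q} (\<lambda>_. cnormal b)"
  interpret B: prob_space ?B using prob_PM[OF b] .
  interpret BL: pair_sigma_finite ?B lborel ..
  have Q1: "Q \<ge> 1" using Q by simp
  have "(\<integral>\<^sup>+h. ennreal (1 / (a * Sq Q h)) \<partial>?B) =
     (\<integral>\<^sup>+h. \<integral>\<^sup>+l. ennreal (exp (- l * (a * Sq Q h))) * indicator {0..} l \<partial>lborel \<partial>?B)"
  proof (rule nn_integral_cong_AE)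
    show "AE h in ?B. ennreal (1 / (a * Sq Q h)) = (\<integral>\<^sup>+l. ennreal (exp (- l * (a * Sq Q h))) * indicator {0..} l \<partial>lborel)"
      using AE_Sq[OF Q1 b]
    proof eventually_elim
      case (elim h)
      then show ?case using LAP1[of "a * Sq Q h"] a by simp
    qed
  qed
  also have "\<dots> = (\<integral>\<^sup>+l. \<integral>\<^sup>+h. ennreal (exp (- l * (a * Sq Q h))) * indicator {0..} l \<partial>?B \<partial>lborel)"
    by (rule BL.Fubini'[symmetric]) measurable
  also have "\<dots> = (\<integral>\<^sup>+l. ennreal ((1 / (1 + l * (a * b))) ^ Q) * indicator {0..} l \<partial>lborel)"
  proof (rule nn_integral_cong)
    fix l :: real
    show "(\<integral>\<^sup>+h. ennreal (exp (- l * (a * Sq Q h))) * indicator {0..} l \<partial>?B) =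
      ennreal ((1 / (1 + l * (a * b))) ^ Q) * indicator {0..} l"
    proof (cases "l \<ge> 0")
      case True
      then show ?thesis
        by (subst nn_integral_multc) (use PROD[OF a b True, of Q] in \<open>auto simp: mult_ac\<close>)
    qed simp
  qed
  also have "\<dots> = ennreal (0 - (- 1 / ((a * b) * (real (Q - 2) + 1)) * (1 / (1 + 0 * (a * b))) ^ (Q - 2 + 1)))"
  proof (rule nn_integral_FTC_atLeast)
    fix l :: real assume l: "0 \<le> l"
    have "Q = Q - 2 + 2" using Q by simp
    then show "((\<lambda>x. - 1 / ((a * b) * (real (Q - 2) + 1)) * (1 / (1 + x * (a * b))) ^ (Q - 2 + 1))
      has_real_derivative (1 / (1 + l * (a * b))) ^ Q) (at l)"
      using der2[of "a * b" l "Q - 2"] a b l by simp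
    show "0 \<le> (1 / (1 + l * (a * b))) ^ Q" using a b l by simp
  next
    show "((\<lambda>x. - 1 / ((a * b) * (real (Q - 2) + 1)) * (1 / (1 + x * (a * b))) ^ (Q - 2 + 1)) \<longlongrightarrow> 0) at_top"
      using lim2[of "a * b" "Q - 2"] a b by simp
  qed measurable
  also have "0 - (- 1 / ((a * b) * (real (Q - 2) + 1)) * (1 / (1 + 0 * (a * b))) ^ (Q - 2 + 1)) = 1 / (a * b * real (Q - 1))"
  proof -
    have "real (Q - 2) + 1 = real (Q - 1)" using Q by linarith
    then show ?thesis by (simp add: mult_ac)
  qed
  finally show ?thesis .
qed

lemma one_minus_exp: "x \<ge> 0 \<Longrightarrow> 0 \<le> 1 - exp (- x) \<and> 1 - exp (- x) \<le> (x::real)"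
  using exp_ge_add_one_self[of "- x"] by auto

lemma MEAS:
  assumes Q: "Q \<ge> 1" and a: "a > 0" and b: "b > 0" and c: "c \<ge> 0"
  shows "measure (branch_space Q a b) {x \<in> space (branch_space Q a b). (cmod (\<Sum>k<Q. fst x k * snd x k))\<^sup>2 \<le> c}
     = (\<integral>h. (1 - exp (- c / (a * Sq Q h))) \<partial>PiM {..<Q} (\<lambda>_. cnormal b))"
proof -
  have nn: "0 \<le> 1 - exp (- c / (a * Sq Q h))" for h
    using one_minus_exp[of "c / (a * Sq Q h)"] a c Sq_nonneg[of Q h] by simp
  show ?thesis
    unfolding measure_def BR[OF Q a b c]
    by (subst integral_eq_nn_integral) (use nn in auto)
qed

lemma LIMQ2:
  assumes Q: "Q \<ge> 2" and a: "a > 0" and b: "b > 0"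
  shows "((\<lambda>t. t * measure (branch_space Q a b) {x \<in> space (branch_space Q a b). (cmod (\<Sum>k<Q. fst x k * snd x k))\<^sup>2 \<le> 1 / t})
     \<longlongrightarrow> 1 / (a * b * real (Q - 1))) at_top"
proof -
  let ?B = "PiM {..<Q} (\<lambda>_. cnormal b)"
  interpret B: prob_space ?B using prob_PM[OF b] .
  have Q1: "Q \<ge> 1" using Q by simp
  define s where "s t h = t * (1 - exp (- 1 / (t * (a * Sq Q h))))" for t h
  define w where "w h = 1 / (a * Sq Q h)" for h
  have [measurable]: "w \<in> borel_measurable ?B" unfolding w_def by measurable
  have [measurable]: "s t \<in> borel_measurable ?B" for t unfolding s_def by measurable
  have wpos: "0 \<le> w h" for h unfolding w_def using a Sq_nonneg[of Q h] by simp
  have nnw: "(\<integral>\<^sup>+h. ennreal (w h) \<partial>?B) = ennreal (1 / (a * b * real (Q - 1)))"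
    unfolding w_def by (rule INVS[OF Q a b])
  have intw: "integrable ?B w"
    by (rule integrableI_nn_integral_finite[OF _ _ nnw]) (auto simp: wpos)
  have iw: "(\<integral>h. w h \<partial>?B) = 1 / (a * b * real (Q - 1))"
  proof -
    have "0 \<le> 1 / (a * b * real (Q - 1))" using a b by simp
    then show ?thesis by (subst integral_eq_nn_integral) (auto simp: wpos nnw)
  qed
  have lim: "AE h in ?B. ((\<lambda>t. s t h) \<longlongrightarrow> w h) at_top"
    using AE_Sq[OF Q1 b]
  proof eventually_elim
    case (elim h)
    then show ?case unfolding s_def w_def using lim1[of "a * Sq Q h"] a by simp
  qed
  have bound: "\<forall>\<^sub>F t in at_top. AE h in ?B. norm (s t h) \<le> w h"
    using eventually_gt_at_top[of "0::real"]
  proof eventually_elim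
    case (elim t)
    show ?case
    proof (rule AE_I2)
      fix h
      show "norm (s t h) \<le> w h"
      proof (cases "Sq Q h = 0")
        case True then show ?thesis by (simp add: s_def w_def)
      next
        case False
        then have K: "a * Sq Q h > 0" using a Sq_nonneg[of Q h] by simp
        have x: "1 / (t * (a * Sq Q h)) \<ge> 0" using K elim by simp
        from one_minus_exp[OF x] have "0 \<le> 1 - exp (- (1 / (t * (a * Sq Q h))))"
          and le: "1 - exp (- (1 / (t * (a * Sq Q h)))) \<le> 1 / (t * (a * Sq Q h))" by auto
        then have "0 \<le> s t h" unfolding s_def using elim by simp
        moreover have "s t h \<le> t * (1 / (t * (a * Sq Q h)))"
          unfolding s_def using le elim by (intro mult_left_mono) auto
        moreover have "t * (1 / (t * (a * Sq Q h))) = w h" unfolding w_def using elim by simp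
        ultimately show ?thesis by simp
      qed
    qed
  qed
  have "((\<lambda>t. \<integral>h. s t h \<partial>?B) \<longlongrightarrow> \<integral>h. w h \<partial>?B) at_top"
    by (rule integral_dominated_convergence_at_top[OF _ _ intw lim bound]) measurable
  then have L: "((\<lambda>t. \<integral>h. s t h \<partial>?B) \<longlongrightarrow> 1 / (a * b * real (Q - 1))) at_top"
    unfolding iw .
  show ?thesis
  proof (rule Lim_transform_eventually[OF L])
    show "\<forall>\<^sub>F t in at_top. (\<integral>h. s t h \<partial>?B) =
      t * measure (branch_space Q a b) {x \<in> space (branch_space Q a b). (cmod (\<Sum>k<Q. fst x k * snd x k))\<^sup>2 \<le> 1 / t}"
      using eventually_gt_at_top[of "0::real"]
    proof eventually_elim
      case (elim t)
      have "t * measure (branch_space Q a b) {x \<in> space (branch_space Q a b). (cmod (\<Sum>k<Q. fst x k * snd x k))\<^sup>2 \<le> 1 / t}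
          = t * (\<integral>h. (1 - exp (- (1 / t) / (a * Sq Q h))) \<partial>?B)"
        using MEAS[OF Q1 a b, of "1 / t"] elim by simp
      also have "\<dots> = (\<integral>h. t * (1 - exp (- (1 / t) / (a * Sq Q h))) \<partial>?B)"
        by (rule integral_mult_right_zero[symmetric])
      also have "\<dots> = (\<integral>h. s t h \<partial>?B)"
        unfolding s_def by (simp add: field_simps)
      finally show ?case by simp
    qed
  qed
qed

definition HH :: "real \<Rightarrow> ennreal" where
  "HH T = (\<integral>\<^sup>+\<tau>. ennreal ((1 - exp (- T / \<tau>\<^sup>2)) * (2 * \<tau> * exp (- \<tau>\<^sup>2))) * indicator {0<..} \<tau> \<partial>lborel)"

lemma HQ1:
  assumes a: "a > 0" and b: "b > 0" and c: "c \<ge> 0"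
  shows "emeasure (branch_space 1 a b) {x \<in> space (branch_space 1 a b). (cmod (\<Sum>k<1. fst x k * snd x k))\<^sup>2 \<le> c}
    = HH (c / (a * b))"
proof -
  define \<psi> where "\<psi> r = ennreal (1 - exp (- c / (a * r)))" for r
  have [measurable]: "\<psi> \<in> borel_measurable borel" unfolding \<psi>_def by measurable
  have "emeasure (branch_space 1 a b) {x \<in> space (branch_space 1 a b). (cmod (\<Sum>k<1. fst x k * snd x k))\<^sup>2 \<le> c}
      = (\<integral>\<^sup>+h. \<psi> ((cmod (\<Sum>k<(1::nat). h k * 1))\<^sup>2) \<partial>PiM {..<(1::nat)} (\<lambda>_. cnormal b))"
  proof -
    have l1: "{..<1::nat} = {0}" by auto
    show ?thesis by (subst BR[OF order.refl a b c]) (simp add: Sq_def \<psi>_def l1)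
  qed
  also have "\<dots> = CNI b (\<lambda>z. \<psi> ((cmod z)\<^sup>2))"
  proof -
    have m: "(\<lambda>z. \<psi> ((cmod z)\<^sup>2)) \<in> borel_measurable borel" by measurable
    show ?thesis using INDG[OF b m, where n=1 and h="\<lambda>_. 1"] by simp
  qed
  also have "\<dots> = (\<integral>\<^sup>+t. \<psi> (t\<^sup>2) * ennreal (2 * t / b * exp (- t\<^sup>2 / b)) * indicator {0<..} t \<partial>lborel)"
    by (rule RAD[OF b]) measurable
  also have "\<dots> = ennreal \<bar>sqrt b\<bar> * (\<integral>\<^sup>+\<tau>. \<psi> ((0 + sqrt b * \<tau>)\<^sup>2) * ennreal (2 * (0 + sqrt b * \<tau>) / b * exp (- (0 + sqrt b * \<tau>)\<^sup>2 / b)) * indicator {0<..} (0 + sqrt b * \<tau>) \<partial>lborel)"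
    by (rule nn_integral_real_affine) (use b in auto)
  also have "\<dots> = (\<integral>\<^sup>+\<tau>. ennreal (sqrt b) * (\<psi> ((0 + sqrt b * \<tau>)\<^sup>2) * ennreal (2 * (0 + sqrt b * \<tau>) / b * exp (- (0 + sqrt b * \<tau>)\<^sup>2 / b)) * indicator {0<..} (0 + sqrt b * \<tau>)) \<partial>lborel)"
    by (subst nn_integral_cmult) (use b in auto)
  also have "\<dots> = HH (c / (a * b))"
    unfolding HH_def
  proof (rule nn_integral_cong)
    fix \<tau> :: real
    show "ennreal (sqrt b) * (\<psi> ((0 + sqrt b * \<tau>)\<^sup>2) * ennreal (2 * (0 + sqrt b * \<tau>) / b * exp (- (0 + sqrt b * \<tau>)\<^sup>2 / b)) * indicator {0<..} (0 + sqrt b * \<tau>))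
      = ennreal ((1 - exp (- (c / (a * b)) / \<tau>\<^sup>2)) * (2 * \<tau> * exp (- \<tau>\<^sup>2))) * indicator {0<..} \<tau>"
    proof (cases "\<tau> > 0")
      case True
      have sb: "sqrt b > 0" "(sqrt b)\<^sup>2 = b" using b by auto
      have pos: "sqrt b * \<tau> > 0" using sb True by simp
      have e0: "0 + sqrt b * \<tau> = sqrt b * \<tau>" by simp
      have e1: "- c / (a * (sqrt b * \<tau>)\<^sup>2) = - (c / (a * b)) / \<tau>\<^sup>2"
        using sb by (simp add: power_mult_distrib field_simps)
      have e2: "- (sqrt b * \<tau>)\<^sup>2 / b = - \<tau>\<^sup>2"
        using sb b by (simp add: power_mult_distrib)
      have e3: "sqrt b * (2 * (sqrt b * \<tau>) / b) = 2 * \<tau>"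
        using sb b by (simp add: field_simps power2_eq_square[symmetric])
      have nn1: "0 \<le> 1 - exp (- (c / (a * b)) / \<tau>\<^sup>2)"
        using one_minus_exp[of "(c / (a * b)) / \<tau>\<^sup>2"] a b c by simp
      have "ennreal (sqrt b) * (\<psi> ((0 + sqrt b * \<tau>)\<^sup>2) * ennreal (2 * (0 + sqrt b * \<tau>) / b * exp (- (0 + sqrt b * \<tau>)\<^sup>2 / b)) * indicator {0<..} (0 + sqrt b * \<tau>))
         = ennreal (sqrt b) * (ennreal (1 - exp (- (c / (a * b)) / \<tau>\<^sup>2)) * ennreal (2 * (sqrt b * \<tau>) / b * exp (- \<tau>\<^sup>2)))"
        using True pos unfolding \<psi>_def e0 e1 e2 by simp
      also have "\<dots> = ennreal ((1 - exp (- (c / (a * b)) / \<tau>\<^sup>2)) * (sqrt b * (2 * (sqrt b * \<tau>) / b) * exp (- \<tau>\<^sup>2)))"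
        using nn1 sb True b by (simp add: ennreal_mult'[symmetric] ennreal_mult[symmetric] mult_ac)
      also have "\<dots> = ennreal ((1 - exp (- (c / (a * b)) / \<tau>\<^sup>2)) * (2 * \<tau> * exp (- \<tau>\<^sup>2)))"
        by (simp only: e3)
      finally show ?thesis using True by simp
    qed (use b in \<open>auto simp: indicator_def zero_less_mult_iff\<close>)
  qed
  finally show ?thesis .
qed

lemma exp_neg_le: "x \<ge> 0 \<Longrightarrow> exp (- x) \<le> 1 / (1 + (x::real))"
proof -
  assume x: "x \<ge> 0"
  have "1 + x \<le> exp x" by (rule exp_ge_add_one_self)
  then have "1 / exp x \<le> 1 / (1 + x)" using x by (intro divide_left_mono) auto
  then show ?thesis by (simp add: exp_minus inverse_eq_divide)
qed

lemma pt_up: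
  fixes T \<tau> :: real
  assumes T: "0 < T" "T \<le> 1"
  shows "ennreal ((1 - exp (- T / \<tau>\<^sup>2)) * (2 * \<tau> * exp (- \<tau>\<^sup>2))) * indicator {0<..} \<tau> \<le>
    ennreal (2 * \<tau>) * indicator {0..sqrt T} \<tau> + ennreal (2 * T / \<tau>) * indicator {sqrt T..1} \<tau>
    + ennreal (2 * T * \<tau> * exp (- \<tau>\<^sup>2)) * indicator {1..} \<tau>"
proof (cases "\<tau> > 0")
  case False then show ?thesis by simp
next
  case True
  define x where "x = T / \<tau>\<^sup>2"
  have x: "x \<ge> 0" using T by (simp add: x_def)
  have x': "- T / \<tau>\<^sup>2 = - x" by (simp add: x_def)
  have om: "0 \<le> 1 - exp (- x)" "1 - exp (- x) \<le> x" using one_minus_exp[OF x] by auto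
  have om1: "1 - exp (- x) \<le> 1" by simp
  have e1: "exp (- \<tau>\<^sup>2) \<le> 1" by simp
  have g0: "0 \<le> 2 * \<tau> * exp (- \<tau>\<^sup>2)" using True by simp
  have g1: "2 * \<tau> * exp (- \<tau>\<^sup>2) \<le> 2 * \<tau>" using mult_left_mono[OF e1, of "2 * \<tau>"] True by simp
  let ?f = "(1 - exp (- x)) * (2 * \<tau> * exp (- \<tau>\<^sup>2))"
  have "ennreal ?f \<le> ennreal (2 * \<tau>) * indicator {0..sqrt T} \<tau> + ennreal (2 * T / \<tau>) * indicator {sqrt T..1} \<tau>
    + ennreal (2 * T * \<tau> * exp (- \<tau>\<^sup>2)) * indicator {1..} \<tau>"
  proof (cases "\<tau> \<le> sqrt T")
    case True
    have "?f \<le> 1 * (2 * \<tau>)"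
      by (rule mult_mono[OF om1 g1]) (use g0 in auto)
    then have "ennreal ?f \<le> ennreal (2 * \<tau>) * indicator {0..sqrt T} \<tau>"
      using True \<open>\<tau> > 0\<close> by (simp add: ennreal_leI)
    then show ?thesis by (rule add_increasing2[OF zero_le add_increasing2[OF zero_le]])
  next
    case False
    show ?thesis
    proof (cases "\<tau> \<le> 1")
      case True
      have "?f \<le> x * (2 * \<tau>)"
        by (rule mult_mono[OF om(2) g1]) (use g0 x in auto)
      also have "x * (2 * \<tau>) = 2 * T / \<tau>" using \<open>\<tau> > 0\<close> by (simp add: x_def power2_eq_square field_simps)
      finally have "ennreal ?f \<le> ennreal (2 * T / \<tau>) * indicator {sqrt T..1} \<tau>"
        using True False by (simp add: ennreal_leI)
      then show ?thesis by (rule add_increasing2[OF zero_le add_increasing[OF zero_le]])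
    next
      case False
      have "?f \<le> x * (2 * \<tau> * exp (- \<tau>\<^sup>2))"
        using om g0 by (intro mult_right_mono) auto
      also have "x * (2 * \<tau> * exp (- \<tau>\<^sup>2)) = (2 * T * exp (- \<tau>\<^sup>2)) / \<tau>"
        using \<open>\<tau> > 0\<close> by (simp add: x_def power2_eq_square field_simps)
      also have "\<dots> \<le> (2 * T * exp (- \<tau>\<^sup>2)) * \<tau>"
      proof -
        define y where "y = 2 * T * exp (- \<tau>\<^sup>2)"
        have y: "y \<ge> 0" using T by (simp add: y_def)
        have t1: "1 * 1 \<le> \<tau> * \<tau>" using False by (intro mult_mono) auto
        have "y \<le> y * (\<tau> * \<tau>)" using mult_left_mono[OF t1 y] by simp
        then have "y / \<tau> \<le> y * \<tau>" using \<open>\<tau> > 0\<close> by (simp add: divide_le_eq mult.assoc)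
        then show ?thesis by (simp add: y_def)
      qed
      finally have "ennreal ?f \<le> ennreal (2 * T * \<tau> * exp (- \<tau>\<^sup>2)) * indicator {1..} \<tau>"
        using False by (simp add: ennreal_leI mult_ac)
      then show ?thesis by (rule add_increasing[OF zero_le])
    qed
  qed
  then show ?thesis using True unfolding x' by simp
qed

lemma lim_exp_sq: "((\<lambda>x::real. - T * exp (- x\<^sup>2)) \<longlongrightarrow> 0) at_top"
proof -
  have "((\<lambda>x::real. exp (- x\<^sup>2)) \<longlongrightarrow> 0) at_top" by real_asymp
  from tendsto_mult_right_zero[OF this, of "- T"] show ?thesis by simp
qed

lemma HUP:
  assumes T: "0 < T" "T \<le> 1"
  shows "HH T \<le> ennreal (- T * ln T + 2 * T)"
proof -
  have sT: "0 < sqrt T" "sqrt T \<le> 1" "(sqrt T)\<^sup>2 = T" using T by auto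
  have lnT: "ln T \<le> 0" using T by simp
  have "HH T \<le> (\<integral>\<^sup>+\<tau>. ennreal (2 * \<tau>) * indicator {0..sqrt T} \<tau> + ennreal (2 * T / \<tau>) * indicator {sqrt T..1} \<tau>
    + ennreal (2 * T * \<tau> * exp (- \<tau>\<^sup>2)) * indicator {1..} \<tau> \<partial>lborel)"
    unfolding HH_def by (rule nn_integral_mono) (rule pt_up[OF T])
  also have "\<dots> = (\<integral>\<^sup>+\<tau>. ennreal (2 * \<tau>) * indicator {0..sqrt T} \<tau> \<partial>lborel)
     + (\<integral>\<^sup>+\<tau>. ennreal (2 * T / \<tau>) * indicator {sqrt T..1} \<tau> \<partial>lborel)
     + (\<integral>\<^sup>+\<tau>. ennreal (2 * T * \<tau> * exp (- \<tau>\<^sup>2)) * indicator {1..} \<tau> \<partial>lborel)"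
  proof -
    have 1: "(\<integral>\<^sup>+\<tau>. ennreal (2 * \<tau>) * indicator {0..sqrt T} \<tau> + ennreal (2 * T / \<tau>) * indicator {sqrt T..1} \<tau>
    + ennreal (2 * T * \<tau> * exp (- \<tau>\<^sup>2)) * indicator {1..} \<tau> \<partial>lborel) =
      (\<integral>\<^sup>+\<tau>. ennreal (2 * \<tau>) * indicator {0..sqrt T} \<tau> + ennreal (2 * T / \<tau>) * indicator {sqrt T..1} \<tau> \<partial>lborel)
     + (\<integral>\<^sup>+\<tau>. ennreal (2 * T * \<tau> * exp (- \<tau>\<^sup>2)) * indicator {1..} \<tau> \<partial>lborel)"
      by (rule nn_integral_add) measurable
    have 2: "(\<integral>\<^sup>+\<tau>. ennreal (2 * \<tau>) * indicator {0..sqrt T} \<tau> + ennreal (2 * T / \<tau>) * indicator {sqrt T..1} \<tau> \<partial>lborel)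
      = (\<integral>\<^sup>+\<tau>. ennreal (2 * \<tau>) * indicator {0..sqrt T} \<tau> \<partial>lborel)
     + (\<integral>\<^sup>+\<tau>. ennreal (2 * T / \<tau>) * indicator {sqrt T..1} \<tau> \<partial>lborel)"
      by (rule nn_integral_add) measurable
    show ?thesis unfolding 1 2 ..
  qed
  also have "(\<integral>\<^sup>+\<tau>. ennreal (2 * \<tau>) * indicator {0..sqrt T} \<tau> \<partial>lborel) = ennreal ((sqrt T)\<^sup>2 - 0\<^sup>2)"
    by (rule nn_integral_FTC_Icc) (use T in \<open>auto intro!: derivative_eq_intros simp: sT\<close>)
  also have "(\<integral>\<^sup>+\<tau>. ennreal (2 * T / \<tau>) * indicator {sqrt T..1} \<tau> \<partial>lborel) = ennreal (2 * T * ln 1 - 2 * T * ln (sqrt T))"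
  proof (rule nn_integral_FTC_Icc)
    fix x assume x: "x \<in> {sqrt T..1}"
    then have "sqrt T \<le> x" by simp
    then have "x > 0" using sT(1) by linarith
    then show "((\<lambda>x. 2 * T * ln x) has_real_derivative 2 * T / x) (at x)"
      by (auto intro!: derivative_eq_intros simp: field_simps)
    show "0 \<le> 2 * T / x" using \<open>x > 0\<close> T by simp
  qed (use sT in auto)
  also have "(\<integral>\<^sup>+\<tau>. ennreal (2 * T * \<tau> * exp (- \<tau>\<^sup>2)) * indicator {1..} \<tau> \<partial>lborel) = ennreal (0 - (- T * exp (- 1\<^sup>2)))"
  proof (rule nn_integral_FTC_atLeast)
    fix x :: real assume "1 \<le> x"
    then show "0 \<le> 2 * T * x * exp (- x\<^sup>2)" using T by simp
  next
    fix x :: real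
    show "((\<lambda>x. - T * exp (- x\<^sup>2)) has_real_derivative 2 * T * x * exp (- x\<^sup>2)) (at x)"
      by (auto intro!: derivative_eq_intros simp: field_simps)
  qed (use lim_exp_sq[of T] in auto)
  also have "ennreal ((sqrt T)\<^sup>2 - 0\<^sup>2) + ennreal (2 * T * ln 1 - 2 * T * ln (sqrt T)) + ennreal (0 - (- T * exp (- 1\<^sup>2)))
     = ennreal (T + (- T * ln T) + T * exp (- 1))"
  proof -
    have "2 * T * ln 1 - 2 * T * ln (sqrt T) = - T * ln T" using T by (simp add: ln_sqrt)
    moreover have "0 \<le> - T * ln T" using T lnT by (simp add: mult_nonneg_nonpos)
    moreover have "0 \<le> T * exp (- 1)" using T by simp
    ultimately show ?thesis using T sT
      by (simp only: ennreal_plus[symmetric] order.refl add_nonneg_nonneg less_imp_le power_zero_numeral diff_zero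
            mult_zero_right diff_0 minus_minus mult_minus_left one_power2 T(1))
  qed
  also have "\<dots> \<le> ennreal (- T * ln T + 2 * T)"
  proof (rule ennreal_leI)
    have "T * exp (- 1) \<le> T * 1" using T by (intro mult_left_mono) auto
    then show "T + - T * ln T + T * exp (- 1) \<le> - T * ln T + 2 * T" by simp
  qed
  finally show ?thesis .
qed

lemma pt_low:
  fixes T \<tau> :: real
  assumes T: "0 < T" "T \<le> 1"
  shows "ennreal (2 * T * \<tau> * (1 - \<tau>\<^sup>2) / (\<tau>\<^sup>2 + T)) * indicator {0..1} \<tau> \<le>
    ennreal ((1 - exp (- T / \<tau>\<^sup>2)) * (2 * \<tau> * exp (- \<tau>\<^sup>2))) * indicator {0<..} \<tau>"
proof (cases "0 < \<tau> \<and> \<tau> \<le> 1")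
  case False
  then show ?thesis by (cases "\<tau> = 0") (auto simp: indicator_def)
next
  case True
  define x where "x = T / \<tau>\<^sup>2"
  have x: "x \<ge> 0" using T by (simp add: x_def)
  have x': "- T / \<tau>\<^sup>2 = - x" by (simp add: x_def)
  have a1: "x / (1 + x) \<le> 1 - exp (- x)"
  proof -
    have "exp (- x) \<le> 1 / (1 + x)" by (rule exp_neg_le[OF x])
    moreover have "1 - 1 / (1 + x) = x / (1 + x)" using x by (simp add: field_simps)
    ultimately show ?thesis by linarith
  qed
  have a2: "1 - \<tau>\<^sup>2 \<le> exp (- \<tau>\<^sup>2)" using exp_ge_add_one_self[of "- \<tau>\<^sup>2"] by simp
  have t2: "\<tau>\<^sup>2 \<le> 1" using True by (simp add: power_le_one)
  have "x / (1 + x) * (2 * \<tau> * (1 - \<tau>\<^sup>2)) \<le> (1 - exp (- x)) * (2 * \<tau> * exp (- \<tau>\<^sup>2))"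
  proof (rule mult_mono[OF a1])
    show "2 * \<tau> * (1 - \<tau>\<^sup>2) \<le> 2 * \<tau> * exp (- \<tau>\<^sup>2)"
      using a2 True by (intro mult_left_mono) auto
    show "0 \<le> 1 - exp (- x)" using one_minus_exp[OF x] by simp
    show "0 \<le> 2 * \<tau> * (1 - \<tau>\<^sup>2)" using True t2 by simp
  qed
  moreover have "x / (1 + x) * (2 * \<tau> * (1 - \<tau>\<^sup>2)) = 2 * T * \<tau> * (1 - \<tau>\<^sup>2) / (\<tau>\<^sup>2 + T)"
    using True T by (simp add: x_def field_simps)
  ultimately have "2 * T * \<tau> * (1 - \<tau>\<^sup>2) / (\<tau>\<^sup>2 + T) \<le> (1 - exp (- x)) * (2 * \<tau> * exp (- \<tau>\<^sup>2))"
    by simp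
  then show ?thesis using True unfolding x' by (simp add: ennreal_leI)
qed

lemma HLOW:
  assumes T: "0 < T" "T \<le> 1"
  shows "ennreal (- T * ln T - T) \<le> HH T"
proof -
  define F where "F \<tau> = T * (1 + T) * ln (\<tau>\<^sup>2 + T) - T * \<tau>\<^sup>2" for \<tau>
  have "(\<integral>\<^sup>+\<tau>. ennreal (2 * T * \<tau> * (1 - \<tau>\<^sup>2) / (\<tau>\<^sup>2 + T)) * indicator {0..1} \<tau> \<partial>lborel) = ennreal (F 1 - F 0)"
  proof (rule nn_integral_FTC_Icc)
    fix x :: real assume x: "x \<in> {0..1}"
    have p: "x\<^sup>2 + T > 0" using T by (simp add: add_nonneg_pos)
    have d1: "((\<lambda>x. ln (x\<^sup>2 + T)) has_real_derivative (2 * x) / (x\<^sup>2 + T)) (at x)"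
      using p by (auto intro!: derivative_eq_intros simp: field_simps)
    have d2: "((\<lambda>x. T * x\<^sup>2) has_real_derivative T * (2 * x)) (at x)"
      by (auto intro!: derivative_eq_intros)
    have d: "(F has_real_derivative T * (1 + T) * ((2 * x) / (x\<^sup>2 + T)) - T * (2 * x)) (at x)"
      unfolding F_def by (intro DERIV_diff DERIV_cmult d1 d2)
    have e: "T * (1 + T) * ((2 * x) / (x\<^sup>2 + T)) - T * (2 * x) = 2 * T * x * (1 - x\<^sup>2) / (x\<^sup>2 + T)"
      using p by (simp add: field_simps)
    show "(F has_real_derivative 2 * T * x * (1 - x\<^sup>2) / (x\<^sup>2 + T)) (at x)"
      using d unfolding e .
    have "x\<^sup>2 \<le> 1" using x by (simp add: power_le_one)
    then show "0 \<le> 2 * T * x * (1 - x\<^sup>2) / (x\<^sup>2 + T)" using x T p by simp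
  qed auto
  moreover have "(\<integral>\<^sup>+\<tau>. ennreal (2 * T * \<tau> * (1 - \<tau>\<^sup>2) / (\<tau>\<^sup>2 + T)) * indicator {0..1} \<tau> \<partial>lborel) \<le> HH T"
    unfolding HH_def by (rule nn_integral_mono) (rule pt_low[OF T])
  ultimately have *: "ennreal (F 1 - F 0) \<le> HH T" by simp
  have "- T * ln T - T \<le> F 1 - F 0"
  proof -
    have "F 1 - F 0 = T * (1 + T) * ln (1 + T) - T - T * (1 + T) * ln T"
      unfolding F_def by (simp add: add.commute)
    moreover have "0 \<le> T * (1 + T) * ln (1 + T)" using T by simp
    moreover have "- T * ln T \<le> - T * (1 + T) * ln T"
    proof -
      have "ln T \<le> 0" using T by simp
      then have "0 \<le> - (T * T * ln T)" using T by (simp add: mult_nonneg_nonpos)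
      then show ?thesis by (simp add: algebra_simps)
    qed
    ultimately show ?thesis by linarith
  qed
  then have "ennreal (- T * ln T - T) \<le> ennreal (F 1 - F 0)" by (rule ennreal_leI)
  from this * show ?thesis by (rule order.trans)
qed

lemma limb1: "((\<lambda>T::real. 1 + 2 / (- ln T)) \<longlongrightarrow> 1) (at_right 0)" by real_asymp
lemma limb2: "((\<lambda>T::real. 1 - 1 / (- ln T)) \<longlongrightarrow> 1) (at_right 0)" by real_asymp

lemma LIMQ1: "((\<lambda>T. enn2real (HH T) / (- T * ln T)) \<longlongrightarrow> 1) (at_right 0)"
proof (rule tendsto_sandwich[OF _ _ limb2 limb1])
  have ev: "eventually (\<lambda>T::real. 0 < T \<and> T < 1) (at_right 0)"
    by (rule eventually_at_rightI[of 0 1]) auto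
  show "\<forall>\<^sub>F T in at_right 0. 1 - 1 / (- ln T) \<le> enn2real (HH T) / (- T * ln T)"
    using ev
  proof eventually_elim
    case (elim T)
    then have T: "0 < T" "T \<le> 1" by auto
    have lnT: "ln T < 0" using elim by simp
    have D: "- T * ln T > 0" using T lnT by (simp add: mult_pos_neg)
    have fin: "HH T < top" by (rule le_less_trans[OF HUP[OF T] ennreal_less_top])
    have "- T * ln T - T \<le> enn2real (HH T)"
    proof (cases "- T * ln T - T \<ge> 0")
      case True
      then show ?thesis using enn2real_mono[OF HLOW[OF T] fin] by simp
    next
      case False
      then show ?thesis using enn2real_nonneg[of "HH T"] by linarith
    qed
    then have "(- T * ln T - T) / (- T * ln T) \<le> enn2real (HH T) / (- T * ln T)"
      using D by (intro divide_right_mono) auto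
    moreover have "(- T * ln T - T) / (- T * ln T) = 1 - 1 / (- ln T)"
      using D T lnT by (simp add: field_simps)
    ultimately show ?case by simp
  qed
  show "\<forall>\<^sub>F T in at_right 0. enn2real (HH T) / (- T * ln T) \<le> 1 + 2 / (- ln T)"
    using ev
  proof eventually_elim
    case (elim T)
    then have T: "0 < T" "T \<le> 1" by auto
    have lnT: "ln T < 0" using elim by simp
    have D: "- T * ln T > 0" using T lnT by (simp add: mult_pos_neg)
    have "enn2real (HH T) \<le> - T * ln T + 2 * T"
    proof -
      have "0 \<le> - T * ln T + 2 * T" using D T by linarith
      then show ?thesis by (rule enn2real_leI[OF _ HUP[OF T]])
    qed
    then have "enn2real (HH T) / (- T * ln T) \<le> (- T * ln T + 2 * T) / (- T * ln T)"
      using D by (intro divide_right_mono) auto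
    moreover have "(- T * ln T + 2 * T) / (- T * ln T) = 1 + 2 / (- ln T)"
      using D T lnT by (simp add: field_simps)
    ultimately show ?case by simp
  qed
qed

lemma filterlim_scale:
  fixes K :: real assumes K: "K > 0"
  shows "filterlim (\<lambda>t. t * K) at_top at_top"
proof -
  have "filterlim (\<lambda>t::real. t) at_top at_top" by (rule filterlim_ident)
  from filterlim_at_top_mult_tendsto_pos[OF tendsto_const K this] show ?thesis .
qed

lemma MAIN:
  fixes P Q :: nat and a b \<gamma> :: real
  assumes P: "P \<ge> 1" and Q: "Q \<ge> 1" and a: "a > 0" and b: "b > 0" and g: "\<gamma> > 0"
  shows "((\<lambda>\<rho>. outage P Q a b \<rho> \<gamma> / outage_asym P Q a b \<rho> \<gamma>) \<longlongrightarrow> 1) at_top"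
proof (cases "Q = 1")
  case True
  define T where "T \<rho> = (\<gamma> / (a * b)) / \<rho>" for \<rho>
  have Tlim: "filterlim T (at_right 0) at_top"
  proof (rule tendsto_imp_filterlim_at_right)
    show "(T \<longlongrightarrow> 0) at_top"
      unfolding T_def by (rule tendsto_divide_0[OF tendsto_const filterlim_at_top_imp_at_infinity[OF filterlim_ident]])
    show "\<forall>\<^sub>F x in at_top. 0 < T x"
      using eventually_gt_at_top[of "0::real"] by eventually_elim (use a b g in \<open>simp add: T_def\<close>)
  qed
  have L: "((\<lambda>\<rho>. (enn2real (HH (T \<rho>)) / (- T \<rho> * ln (T \<rho>))) ^ P) \<longlongrightarrow> 1 ^ P) at_top"
    by (intro tendsto_power filterlim_compose[OF LIMQ1 Tlim])
  show ?thesis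
  proof (rule Lim_transform_eventually[OF L[unfolded power_one]])
    show "\<forall>\<^sub>F \<rho> in at_top. (enn2real (HH (T \<rho>)) / (- T \<rho> * ln (T \<rho>))) ^ P = outage P Q a b \<rho> \<gamma> / outage_asym P Q a b \<rho> \<gamma>"
      using eventually_gt_at_top[of "0::real"]
    proof eventually_elim
      case (elim \<rho>)
      have c: "\<gamma> / \<rho> \<ge> 0" using g elim by simp
      have Tpos: "T \<rho> > 0" using a b g elim by (simp add: T_def)
      have Te: "(\<gamma> / \<rho>) / (a * b) = T \<rho>" "\<gamma> / (\<rho> * a * b) = T \<rho>"
        by (simp_all add: T_def field_simps)
      have "outage P Q a b \<rho> \<gamma> = (measure (branch_space 1 a b) {x \<in> space (branch_space 1 a b). (cmod (\<Sum>k<1. fst x k * snd x k))\<^sup>2 \<le> \<gamma> / \<rho>}) ^ P"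
        using OUT[OF P a b elim, of Q \<gamma>] True by simp
      also have "\<dots> = (enn2real (HH (T \<rho>))) ^ P"
        unfolding measure_def HQ1[OF a b c] Te ..
      finally have o: "outage P Q a b \<rho> \<gamma> = (enn2real (HH (T \<rho>))) ^ P" .
      have "outage_asym P Q a b \<rho> \<gamma> = (- 2 * T \<rho> * ln (sqrt (T \<rho>))) ^ P"
        unfolding outage_asym_def using True Te by simp
      also have "- 2 * T \<rho> * ln (sqrt (T \<rho>)) = - T \<rho> * ln (T \<rho>)"
        using Tpos by (simp add: ln_sqrt)
      finally have oa: "outage_asym P Q a b \<rho> \<gamma> = (- T \<rho> * ln (T \<rho>)) ^ P" .
      show ?case unfolding o oa by (rule power_divide)
    qed
  qed
next
  case False
  then have Q2: "Q \<ge> 2" using Q by simp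
  define t where "t \<rho> = \<rho> * (1 / \<gamma>)" for \<rho>
  define Fm where "Fm c = measure (branch_space Q a b) {x \<in> space (branch_space Q a b). (cmod (\<Sum>k<Q. fst x k * snd x k))\<^sup>2 \<le> c}" for c
  define K where "K = a * b * real (Q - 1)"
  have K: "K > 0" using a b Q2 by (simp add: K_def)
  have tlim: "filterlim t at_top at_top"
    unfolding t_def by (rule filterlim_scale) (use g in simp)
  have L2: "((\<lambda>\<rho>. t \<rho> * Fm (1 / t \<rho>)) \<longlongrightarrow> 1 / K) at_top"
    unfolding Fm_def K_def by (rule filterlim_compose[OF LIMQ2[OF Q2 a b] tlim])
  have L: "((\<lambda>\<rho>. (t \<rho> * Fm (1 / t \<rho>) * K) ^ P) \<longlongrightarrow> (1 / K * K) ^ P) at_top"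
    by (intro tendsto_power tendsto_mult L2 tendsto_const)
  have e1: "(1 / K * K) ^ P = 1" using K by simp
  show ?thesis
  proof (rule Lim_transform_eventually[OF L[unfolded e1]])
    show "\<forall>\<^sub>F \<rho> in at_top. (t \<rho> * Fm (1 / t \<rho>) * K) ^ P = outage P Q a b \<rho> \<gamma> / outage_asym P Q a b \<rho> \<gamma>"
      using eventually_gt_at_top[of "0::real"]
    proof eventually_elim
      case (elim \<rho>)
      have tt: "1 / t \<rho> = \<gamma> / \<rho>" by (simp add: t_def)
      have o: "outage P Q a b \<rho> \<gamma> = Fm (\<gamma> / \<rho>) ^ P"
        unfolding Fm_def by (rule OUT[OF P a b elim])
      have oa: "outage_asym P Q a b \<rho> \<gamma> = (\<gamma> / (\<rho> * K)) ^ P"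
        unfolding outage_asym_def K_def using False by (simp add: mult_ac)
      have eq: "t \<rho> * Fm (\<gamma> / \<rho>) * K = Fm (\<gamma> / \<rho>) / (\<gamma> / (\<rho> * K))"
        using g elim K by (simp add: t_def field_simps)
      show ?case unfolding o oa tt eq by (rule power_divide)
    qed
  qed
qed

theorem corollary5:
  fixes P Q :: nat and \<Omega>sr \<Omega>rd R\<^sub>o\<^sub>m\<^sub>a :: real
  assumes "P \<ge> 1" and "Q \<ge> 1" and "\<Omega>sr > 0" and "\<Omega>rd > 0" and "R\<^sub>o\<^sub>m\<^sub>a > 0"
  shows "((\<lambda>\<rho>. outage P Q \<Omega>sr \<Omega>rd \<rho> (2 powr R\<^sub>o\<^sub>m\<^sub>a - 1)
                / outage_asym P Q \<Omega>sr \<Omega>rd \<rho> (2 powr R\<^sub>o\<^sub>m\<^sub>a - 1)) \<longlongrightarrow> 1) at_top"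
proof (rule MAIN)
  show "2 powr R\<^sub>o\<^sub>m\<^sub>a - 1 > 0" using assms(5) by simp
qed (use assms in auto)

end
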